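(* (a) The IB reachability problem is recursively equivalent to the IB control-state reachability problem for FIFO machines. (b) The IB reachability problem is recursively reducible to the IB deadlock problem for FIFO machines. Here, for a FIFO machine $M$, a tuple $(L_c)_{c\in\mathit{Ch}}$ of non-empty regular bounded languages $L_c\subseteq\Sigma_c^\ast$, a configuration $s$ and a control state $q$: IB reachability asks whether $s\in\mathrm{Reach}_M(L_!)$; IB control-state reachability asks whether $(q,\mathbf{w})\in\mathrm{Reach}_M(L_!)$ for some $\mathbf{w}$; IB deadlock asks whether $\mathrm{Reach}_M(L_!)$ contains a deadlock.
   Context: A bounded language over non-empty words $(w_1,\ldots,w_n)$ is a language $L\subseteq w_1^\ast\cdots w_n^\ast$. A FIFO machine is $M=(Q,\mathit{Ch},\Sigma,\Delta,q_0)$ with finite control states $Q$, initial state $q_0$, finite channels $\mathit{Ch}$, alphabet $\Sigma=\biguplus_c\Sigma_c$, and $\Delta\subseteq Q\times A_M\times Q$, $A_M=\{c!a,c?a\mid c\in\mathit{Ch},a\in\Sigma_c\}$. Configurations $(q,\mathbf{w})$ with $\mathbf{w}\in\prod_c\Sigma_c^\ast$; initial $(q_0,(\varepsilon)_c)$. A send $c!a$ appends $a$ to channel $c$; a receive $c?a$ removes $a$ from the head of channel $c$ (only possible if $a$ is at the head); other channels unchanged; the control state moves along a transition of $\Delta$. $\mathrm{Reach}_M(L)$ is the set of configurations reachable from the initial one via a label word in $L\subseteq A_M^\ast$. $L_!=\{\sigma\in A_M^\ast\mid\mathrm{proj}_{c!}(\sigma)\in L_c\ \forall c\}$ where $\mathrm{proj}_{c!}$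 keeps the messages of send actions on $c$ and erases all other actions. A deadlock is a configuration with no successor. *)

theory Defs
  imports Main "HOL-Library.Nat_Bijection"
begin

datatype recf = Zero | Succ | Proj nat | Comp recf "recf list" | Prim recf recf | Mu recf

inductive eval :: "recf \<Rightarrow> nat list \<Rightarrow> nat \<Rightarrow> bool" where
  ev_zero: "eval Zero xs 0"
| ev_succ: "eval Succ (x # xs) (Suc x)"
| ev_proj: "i < length xs \<Longrightarrow> eval (Proj i) xs (xs ! i)"
| ev_comp: "length ys = length gs \<Longrightarrow> (\<forall>i<length gs. eval (gs ! i) xs (ys ! i))
            \<Longrightarrow> eval f ys z \<Longrightarrow> eval (Comp f gs) xs z"
| ev_prim0: "eval g xs y \<Longrightarrow> eval (Prim g h) (0 # xs) y"
| ev_primS: "eval (Prim g h) (n # xs) y \<Longrightarrow> eval h (y # n # xs) z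
            \<Longrightarrow> eval (Prim g h) (Suc n # xs) z"
| ev_mu: "eval f (n # xs) 0 \<Longrightarrow> (\<forall>m<n. \<exists>k. k > 0 \<and> eval f (m # xs) k)
            \<Longrightarrow> eval (Mu f) xs n"

definition computable :: "(nat \<Rightarrow> nat) \<Rightarrow> bool" where
  "computable f \<longleftrightarrow> (\<exists>r. \<forall>n. eval r [n] (f n))"

definition many_one_reducible ::
  "('a \<Rightarrow> nat) \<Rightarrow> ('a \<Rightarrow> bool) \<Rightarrow> ('a \<Rightarrow> bool) \<Rightarrow>
   ('b \<Rightarrow> nat) \<Rightarrow> ('b \<Rightarrow> bool) \<Rightarrow> ('b \<Rightarrow> bool) \<Rightarrow> bool" where
  "many_one_reducible encA validA yesA encB validB yesB \<longleftrightarrow>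
     (\<exists>f. computable f \<and>
        (\<forall>i. validA i \<longrightarrow> (\<exists>j. validB j \<and> f (encA i) = encB j \<and> (yesA i \<longleftrightarrow> yesB j))))"

text \<open>Channels are 0..<nch; the message alphabet of channel c is alph!c;
  messages are implicitly tagged by their channel, so the alphabets are disjoint.\<close>
datatype act = Snd nat nat | Rcv nat nat   (* channel, message *)

record fifo =
  states :: "nat list"
  nch :: nat
  alph :: "nat list list"
  delta :: "(nat \<times> act \<times> nat) list"
  init :: nat

type_synonym cfg = "nat \<times> nat list list"

definition actions :: "fifo \<Rightarrow> act set" where
  "actions M = {Snd c a | c a. c < nch M \<and> a \<in> set (alph M ! c)}
             \<union> {Rcv c a | c a. c < nch M \<and> a \<in> set (alph M ! c)}"

definition wf_fifo :: "fifo \<Rightarrow> bool" where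
  "wf_fifo M \<longleftrightarrow> length (alph M) = nch M \<and> init M \<in> set (states M) \<and>
     (\<forall>(q, a, q') \<in> set (delta M). q \<in> set (states M) \<and> q' \<in> set (states M) \<and> a \<in> actions M)"

fun apply_act :: "act \<Rightarrow> nat list list \<Rightarrow> nat list list option" where
  "apply_act (Snd c a) ws = (if c < length ws then Some (ws[c := ws ! c @ [a]]) else None)"
| "apply_act (Rcv c a) ws = (if c < length ws then
      (case ws ! c of [] \<Rightarrow> None | b # r \<Rightarrow> if b = a then Some (ws[c := r]) else None)
    else None)"

definition step :: "fifo \<Rightarrow> cfg \<Rightarrow> act \<Rightarrow> cfg \<Rightarrow> bool" where
  "step M c \<alpha> c' \<longleftrightarrow> (fst c, \<alpha>, fst c') \<in> set (delta M) \<and> apply_act \<alpha> (snd c) = Some (snd c')"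

fun runs :: "fifo \<Rightarrow> cfg \<Rightarrow> act list \<Rightarrow> cfg \<Rightarrow> bool" where
  "runs M c [] c' \<longleftrightarrow> c' = c"
| "runs M c (\<alpha> # \<sigma>) c' \<longleftrightarrow> (\<exists>c''. step M c \<alpha> c'' \<and> runs M c'' \<sigma> c')"

definition init_cfg :: "fifo \<Rightarrow> cfg" where
  "init_cfg M = (init M, replicate (nch M) [])"

definition Reach :: "fifo \<Rightarrow> act list set \<Rightarrow> cfg set" where
  "Reach M L = {c. \<exists>\<sigma>\<in>L. runs M (init_cfg M) \<sigma> c}"

definition is_config :: "fifo \<Rightarrow> cfg \<Rightarrow> bool" where
  "is_config M c \<longleftrightarrow> fst c \<in> set (states M) \<and> length (snd c) = nch M \<and>
     (\<forall>i<nch M. set (snd c ! i) \<subseteq> set (alph M ! i))"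

definition deadlock :: "fifo \<Rightarrow> cfg \<Rightarrow> bool" where
  "deadlock M c \<longleftrightarrow> \<not> (\<exists>\<alpha> c'. step M c \<alpha> c')"

fun proj_send :: "nat \<Rightarrow> act list \<Rightarrow> nat list" where
  "proj_send c [] = []"
| "proj_send c (Snd d a # \<sigma>) = (if d = c then a # proj_send c \<sigma> else proj_send c \<sigma>)"
| "proj_send c (Rcv d a # \<sigma>) = proj_send c \<sigma>"

definition Lsend :: "fifo \<Rightarrow> (nat \<Rightarrow> nat list set) \<Rightarrow> act list set" where
  "Lsend M L = {\<sigma>. set \<sigma> \<subseteq> actions M \<and> (\<forall>c<nch M. proj_send c \<sigma> \<in> L c)}"

record nfa =
  nstart :: "nat list"
  ntrans :: "(nat \<times> nat \<times> nat) list"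
  nfinal :: "nat list"

definition nfa_step :: "nfa \<Rightarrow> nat set \<Rightarrow> nat \<Rightarrow> nat set" where
  "nfa_step A S a = {q'. \<exists>q\<in>S. (q, a, q') \<in> set (ntrans A)}"

definition nfa_lang :: "nfa \<Rightarrow> nat list set" where
  "nfa_lang A = {w. foldl (nfa_step A) (set (nstart A)) w \<inter> set (nfinal A) \<noteq> {}}"

definition bounded_lang :: "nat list set \<Rightarrow> bool" where
  "bounded_lang L \<longleftrightarrow> (\<exists>ws. (\<forall>w\<in>set ws. w \<noteq> []) \<and>
     (\<forall>u\<in>L. \<exists>ks. length ks = length ws \<and>
        u = concat (map (\<lambda>(w, k). concat (replicate k w)) (zip ws ks))))"

definition valid_langs :: "fifo \<Rightarrow> nfa list \<Rightarrow> bool" where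
  "valid_langs M As \<longleftrightarrow> length As = nch M \<and>
     (\<forall>c<nch M. nfa_lang (As ! c) \<noteq> {} \<and> bounded_lang (nfa_lang (As ! c)) \<and>
                nfa_lang (As ! c) \<subseteq> lists (set (alph M ! c)))"

definition LsendA :: "fifo \<Rightarrow> nfa list \<Rightarrow> act list set" where
  "LsendA M As = Lsend M (\<lambda>c. nfa_lang (As ! c))"

definition enc_nl :: "nat list \<Rightarrow> nat" where "enc_nl = list_encode"
definition enc_nll :: "nat list list \<Rightarrow> nat" where "enc_nll ws = list_encode (map list_encode ws)"

fun enc_act :: "act \<Rightarrow> nat" where
  "enc_act (Snd c a) = sum_encode (Inl (prod_encode (c, a)))"
| "enc_act (Rcv c a) = sum_encode (Inr (prod_encode (c, a)))"

definition enc_fifo :: "fifo \<Rightarrow> nat" where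
  "enc_fifo M = list_encode [list_encode (states M), nch M, enc_nll (alph M),
     list_encode (map (\<lambda>(q, a, q'). prod_encode (q, prod_encode (enc_act a, q'))) (delta M)),
     init M]"

definition enc_nfa :: "nfa \<Rightarrow> nat" where
  "enc_nfa A = list_encode [list_encode (nstart A),
     list_encode (map (\<lambda>(q, a, q'). prod_encode (q, prod_encode (a, q'))) (ntrans A)),
     list_encode (nfinal A)]"

definition enc_langs :: "nfa list \<Rightarrow> nat" where
  "enc_langs As = list_encode (map enc_nfa As)"

type_synonym reach_inst = "fifo \<times> nfa list \<times> cfg"
type_synonym cs_inst = "fifo \<times> nfa list \<times> nat"
type_synonym dl_inst = "fifo \<times> nfa list"

definition enc_reach :: "reach_inst \<Rightarrow> nat" where
  "enc_reach i = (case i of (M, As, (q, ws)) \<Rightarrow>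
     list_encode [enc_fifo M, enc_langs As, prod_encode (q, enc_nll ws)])"
definition valid_reach :: "reach_inst \<Rightarrow> bool" where
  "valid_reach i = (case i of (M, As, s) \<Rightarrow> wf_fifo M \<and> valid_langs M As \<and> is_config M s)"
definition IB_reach :: "reach_inst \<Rightarrow> bool" where
  "IB_reach i = (case i of (M, As, s) \<Rightarrow> s \<in> Reach M (LsendA M As))"

definition enc_cs :: "cs_inst \<Rightarrow> nat" where
  "enc_cs i = (case i of (M, As, q) \<Rightarrow> list_encode [enc_fifo M, enc_langs As, q])"
definition valid_cs :: "cs_inst \<Rightarrow> bool" where
  "valid_cs i = (case i of (M, As, q) \<Rightarrow> wf_fifo M \<and> valid_langs M As \<and> q \<in> set (states M))"
definition IB_cs_reach :: "cs_inst \<Rightarrow> bool" where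
  "IB_cs_reach i = (case i of (M, As, q) \<Rightarrow> (\<exists>ws. (q, ws) \<in> Reach M (LsendA M As)))"

definition enc_dl :: "dl_inst \<Rightarrow> nat" where
  "enc_dl i = (case i of (M, As) \<Rightarrow> list_encode [enc_fifo M, enc_langs As])"
definition valid_dl :: "dl_inst \<Rightarrow> bool" where
  "valid_dl i = (case i of (M, As) \<Rightarrow> wf_fifo M \<and> valid_langs M As)"
definition IB_deadlock :: "dl_inst \<Rightarrow> bool" where
  "IB_deadlock i = (case i of (M, As) \<Rightarrow> (\<exists>s\<in>Reach M (LsendA M As). deadlock M s))"

end

theory Submission
  imports Defs
begin

section \<open>Basic recursive functions\<close>

lemma ev_proj': "i < length xs \<Longrightarrow> y = xs ! i \<Longrightarrow> eval (Proj i) xs y"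
  using ev_proj by simp

lemma eval_eq: "eval r xs y \<Longrightarrow> y = z \<Longrightarrow> eval r xs z" by simp

lemmas evI = ev_proj' ev_zero ev_succ ev_prim0 ev_primS

definition r_add :: recf where "r_add = Prim (Proj 0) (Comp Succ [Proj 0])"

lemma eval_r_add: "eval r_add [n, x] (n + x)"
proof (induction n)
  case 0
  then show ?case unfolding r_add_def by (auto intro!: evI)
next
  case (Suc n)
  have "eval (Comp Succ [Proj 0]) [n + x, n, x] (Suc (n + x))"
    by (rule ev_comp[where ys="[n+x]"]) (auto intro!: evI simp: less_Suc_eq)
  then show ?case using Suc unfolding r_add_def by (auto intro: evI)
qed

definition r_mul :: recf where "r_mul = Prim Zero (Comp r_add [Proj 0, Proj 2])"

lemma eval_r_mul: "eval r_mul [n, x] (n * x)"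
proof (induction n)
  case 0
  then show ?case unfolding r_mul_def by (auto intro!: evI)
next
  case (Suc n)
  have "eval (Comp r_add [Proj 0, Proj 2]) [n * x, n, x] (n * x + x)"
    by (rule ev_comp[where ys="[n*x, x]"]) (auto intro!: evI eval_r_add simp: less_Suc_eq nth_Cons')
  then show ?case using Suc unfolding r_mul_def by (auto intro: evI simp: add.commute)
qed

definition r_pred :: recf where "r_pred = Prim Zero (Proj 1)"

lemma eval_r_pred: "eval r_pred [n] (n - 1)"
proof (induction n)
  case 0
  then show ?case unfolding r_pred_def by (auto intro!: evI)
next
  case (Suc m)
  then show ?case unfolding r_pred_def
    by (auto intro!: ev_primS[where y="m-1"] evI)
qed

definition r_monus :: recf where "r_monus = Prim (Proj 0) (Comp r_pred [Proj 0])"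

lemma eval_r_monus: "eval r_monus [y, x] (x - y)"
proof (induction y)
  case 0
  then show ?case unfolding r_monus_def by (auto intro!: evI)
next
  case (Suc y)
  have "eval (Comp r_pred [Proj 0]) [x - y, y, x] (x - y - 1)"
    by (rule ev_comp[where ys="[x - y]"]) (auto intro!: evI eval_eq[OF eval_r_pred])
  then show ?case using Suc unfolding r_monus_def by (auto intro: evI)
qed

definition r_tri :: recf where "r_tri = Prim Zero (Comp r_add [Proj 0, Comp Succ [Proj 1]])"

lemma eval_r_tri: "eval r_tri [n] (triangle n)"
proof (induction n)
  case 0
  then show ?case unfolding r_tri_def by (auto intro!: evI)
next
  case (Suc n)
  have s: "eval (Comp Succ [Proj (Suc 0)]) [triangle n, n] (Suc n)"
    by (rule ev_comp[where ys="[n]"]) (auto intro!: evI)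
  have "eval (Comp r_add [Proj 0, Comp Succ [Proj 1]]) [triangle n, n] (triangle n + Suc n)"
    by (rule ev_comp[where ys="[triangle n, Suc n]"]) (auto intro!: evI eval_eq[OF eval_r_add] s simp: less_Suc_eq nth_Cons')
  then show ?case using Suc unfolding r_tri_def by (auto intro: evI)
qed

section \<open>Closure properties\<close>

definition rec2 :: "recf \<Rightarrow> (nat \<Rightarrow> nat \<Rightarrow> nat) \<Rightarrow> bool" where
  "rec2 r F \<longleftrightarrow> (\<forall>x y. eval r [x, y] (F x y))"

lemma comp_bin:
  assumes "rec2 r F" "computable f" "computable g"
  shows "computable (\<lambda>n. F (f n) (g n))"
proof -
  obtain rf rg where f: "\<forall>n. eval rf [n] (f n)" and g: "\<forall>n. eval rg [n] (g n)"
    using assms(2,3) unfolding computable_def by blast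
  have "\<forall>n. eval (Comp r [rf, rg]) [n] (F (f n) (g n))"
  proof
    fix n show "eval (Comp r [rf, rg]) [n] (F (f n) (g n))"
      by (rule ev_comp[where ys="[f n, g n]"]) (use f g assms(1) in \<open>auto simp: rec2_def less_Suc_eq nth_Cons'\<close>)
  qed
  then show ?thesis unfolding computable_def by blast
qed

lemma comp_un:
  assumes "computable F" "computable g"
  shows "computable (\<lambda>n. F (g n))"
proof -
  obtain rf rg where f: "\<forall>n. eval rf [n] (F n)" and g: "\<forall>n. eval rg [n] (g n)"
    using assms unfolding computable_def by blast
  have "\<forall>n. eval (Comp rf [rg]) [n] (F (g n))"
  proof
    fix n show "eval (Comp rf [rg]) [n] (F (g n))"
      by (rule ev_comp[where ys="[g n]"]) (use f g in auto)
  qed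
  then show ?thesis unfolding computable_def by blast
qed

lemma comp_id[intro!]: "computable (\<lambda>n. n)"
  unfolding computable_def by (auto intro!: exI[of _ "Proj 0"] evI)

fun constr :: "nat \<Rightarrow> recf" where
  "constr 0 = Zero" | "constr (Suc k) = Comp Succ [constr k]"

lemma eval_constr: "eval (constr k) xs k"
  by (induction k) (auto intro!: evI ev_comp[where ys="[_]"])

lemma comp_const[intro!]: "computable (\<lambda>n. k)"
  unfolding computable_def using eval_constr by blast

lemma comp_add[intro!]: "computable f \<Longrightarrow> computable g \<Longrightarrow> computable (\<lambda>n. f n + g n)"
  by (rule comp_bin[where r=r_add]) (auto simp: rec2_def eval_r_add)

lemma comp_mul[intro!]: "computable f \<Longrightarrow> computable g \<Longrightarrow> computable (\<lambda>n. f n * g n)"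
  by (rule comp_bin[where r=r_mul]) (auto simp: rec2_def eval_r_mul)

lemma comp_sub[intro!]: "computable f \<Longrightarrow> computable g \<Longrightarrow> computable (\<lambda>n. f n - g n)"
  using comp_bin[where r=r_monus and F="\<lambda>y x. x - y" and f=g and g=f]
  by (auto simp: rec2_def eval_r_monus)

lemma comp_Suc[intro!]: "computable f \<Longrightarrow> computable (\<lambda>n. Suc (f n))"
  using comp_add[of f "\<lambda>n. 1"] by auto

lemma comp_tri[intro!]: "computable f \<Longrightarrow> computable (\<lambda>n. triangle (f n))"
  by (rule comp_un[where F=triangle]) (auto simp: computable_def intro: eval_r_tri)

lemma comp_pe[intro!]: "computable f \<Longrightarrow> computable g \<Longrightarrow> computable (\<lambda>n. prod_encode (f n, g n))"
  unfolding prod_encode_def by auto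

lemma comp_if0[intro!]:
  assumes "computable t" "computable f" "computable g"
  shows "computable (\<lambda>n. if t n = 0 then f n else g n)"
proof -
  have "computable (\<lambda>n. f n * (1 - t n) + g n * (1 - (1 - t n)))" using assms by auto
  moreover have "(\<lambda>n. f n * (1 - t n) + g n * (1 - (1 - t n))) = (\<lambda>n. if t n = 0 then f n else g n)"
    by auto
  ultimately show ?thesis by simp
qed

lemma comp_if_eq[intro!]:
  assumes "computable a" "computable b" "computable f" "computable g"
  shows "computable (\<lambda>n. if a n = b n then f n else g n)"
proof -
  have "computable (\<lambda>n. if (a n - b n) + (b n - a n) = 0 then f n else g n)"
    by (intro comp_if0 comp_add comp_sub assms)
  moreover have "(\<lambda>n. if (a n - b n) + (b n - a n) = 0 then f n else g n) = (\<lambda>n. if a n = b n then f n else g n)"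
    by auto
  ultimately show ?thesis by (simp only:)
qed

lemma comp_mu:
  assumes "rec2 r F" "\<forall>n. \<exists>k. F k n = 0"
  shows "computable (\<lambda>n. LEAST k. F k n = 0)"
proof -
  have "\<forall>n. eval (Mu r) [n] (LEAST k. F k n = 0)"
  proof
    fix n
    obtain k where k: "F k n = 0" using assms(2) by blast
    have "F (LEAST k. F k n = 0) n = 0" by (rule LeastI[of _ k]) (rule k)
    moreover have "\<forall>m<(LEAST k. F k n = 0). F m n > 0"
      using not_less_Least by fastforce
    ultimately show "eval (Mu r) [n] (LEAST k. F k n = 0)"
      using assms(1) unfolding rec2_def by (auto intro!: ev_mu intro: eval_eq)
  qed
  then show ?thesis unfolding computable_def by blast
qed

definition pf :: "nat \<Rightarrow> nat" where "pf p = fst (prod_decode p)"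
definition ps :: "nat \<Rightarrow> nat" where "ps p = snd (prod_decode p)"

lemma pf_pe[simp]: "pf (prod_encode (a, b)) = a" by (simp add: pf_def)
lemma ps_pe[simp]: "ps (prod_encode (a, b)) = b" by (simp add: ps_def)

definition tri_root :: "nat \<Rightarrow> nat" where
  "tri_root n = (LEAST k. Suc n - triangle (Suc k) = 0)"

lemma tri_ge: "n \<le> triangle n"
  by (induction n) auto

lemma tri_root_props: "triangle (tri_root n) \<le> n \<and> n < triangle (Suc (tri_root n))"
proof -
  let ?P = "\<lambda>k. Suc n - triangle (Suc k) = 0"
  have ex: "?P n" using tri_ge[of "Suc n"] by simp
  have 1: "?P (tri_root n)" unfolding tri_root_def by (rule LeastI[of ?P n]) (rule ex)
  have 2: "triangle (tri_root n) \<le> n"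
  proof (cases "tri_root n")
    case 0 then show ?thesis by simp
  next
    case (Suc m)
    then have "m < tri_root n" by simp
    then have "\<not> ?P m" unfolding tri_root_def by (rule not_less_Least)
    then show ?thesis using Suc by simp
  qed
  show ?thesis using 1 2 by simp
qed

lemma prod_decode_tri: "prod_decode n = (n - triangle (tri_root n), tri_root n - (n - triangle (tri_root n)))"
proof -
  let ?k = "tri_root n"
  have p: "triangle ?k \<le> n" "n < triangle ?k + Suc ?k" using tri_root_props[of n] by auto
  have "prod_encode (n - triangle ?k, ?k - (n - triangle ?k)) = n"
    using p by (simp add: prod_encode_def)
  then show ?thesis by (metis prod_encode_inverse)
qed

lemma comp_tri_root: "computable tri_root"
proof -
  let ?r = "Comp r_monus [Comp r_tri [Comp Succ [Proj 0]], Comp Succ [Proj 1]]"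
  have "rec2 ?r (\<lambda>k n. Suc n - triangle (Suc k))"
    unfolding rec2_def
  proof (intro allI)
    fix k n
    have a: "eval (Comp Succ [Proj 0]) [k, n] (Suc k)"
      by (rule ev_comp[where ys="[k]"]) (auto intro!: evI)
    have b: "eval (Comp Succ [Proj 1]) [k, n] (Suc n)"
      by (rule ev_comp[where ys="[n]"]) (auto intro!: evI)
    have c: "eval (Comp r_tri [Comp Succ [Proj 0]]) [k, n] (triangle (Suc k))"
      by (rule ev_comp[where ys="[Suc k]"]) (use a eval_r_tri in \<open>auto simp del: triangle_Suc\<close>)
    show "eval ?r [k, n] (Suc n - triangle (Suc k))"
      by (rule ev_comp[where ys="[triangle (Suc k), Suc n]"])
        (use b c eval_r_monus in \<open>auto simp: less_Suc_eq nth_Cons' simp del: triangle_Suc\<close>)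
  qed
  moreover have "\<forall>n. \<exists>k. Suc n - triangle (Suc k) = 0"
    using tri_ge by (metis diff_is_0_eq)
  ultimately show ?thesis unfolding tri_root_def by (rule comp_mu)
qed

lemma comp_pf[intro!]: "computable f \<Longrightarrow> computable (\<lambda>n. pf (f n))"
proof -
  assume f: "computable f"
  have "computable (\<lambda>n. f n - triangle (tri_root (f n)))"
    using f comp_un[OF comp_tri_root f] by auto
  then show ?thesis by (simp add: pf_def prod_decode_tri)
qed

lemma comp_ps[intro!]: "computable f \<Longrightarrow> computable (\<lambda>n. ps (f n))"
proof -
  assume f: "computable f"
  have t: "computable (\<lambda>n. tri_root (f n))" using comp_un[OF comp_tri_root f] .
  have "computable (\<lambda>n. tri_root (f n) - (f n - triangle (tri_root (f n))))"
    using f t by auto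
  then show ?thesis by (simp add: ps_def prod_decode_tri)
qed

definition r_iter :: "recf \<Rightarrow> recf" where "r_iter rg = Prim (Proj 0) (Comp rg [Proj 0])"

lemma eval_r_iter:
  assumes "\<forall>n. eval rg [n] (g n)"
  shows "eval (r_iter rg) [k, x] ((g ^^ k) x)"
proof (induction k)
  case 0
  then show ?case unfolding r_iter_def by (auto intro!: evI)
next
  case (Suc k)
  have "eval (Comp rg [Proj 0]) [(g ^^ k) x, k, x] (g ((g ^^ k) x))"
    by (rule ev_comp[where ys="[(g ^^ k) x]"]) (use assms in \<open>auto intro!: evI\<close>)
  then show ?case using Suc unfolding r_iter_def by (auto intro: evI)
qed

lemma comp_iter_simple:
  assumes "computable g" "computable nf" "computable xf"
  shows "computable (\<lambda>m. (g ^^ nf m) (xf m))"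
proof -
  obtain rg where "\<forall>n. eval rg [n] (g n)" using assms(1) unfolding computable_def by blast
  then have "rec2 (r_iter rg) (\<lambda>k x. (g ^^ k) x)" unfolding rec2_def using eval_r_iter by blast
  then show ?thesis using comp_bin assms(2,3) by blast
qed

lemma comp_iter:
  assumes "computable (\<lambda>p. G (pf p) (ps p))" "computable nf" "computable zf" "computable xf"
  shows "computable (\<lambda>m. (G (zf m) ^^ nf m) (xf m))"
proof -
  let ?H = "\<lambda>p. prod_encode (pf p, G (pf p) (ps p))"
  have H: "computable ?H" using assms(1) by auto
  have it: "(?H ^^ k) (prod_encode (z, x)) = prod_encode (z, (G z ^^ k) x)" for k z x
    by (induction k) auto
  have "computable (\<lambda>m. ps ((?H ^^ nf m) (prod_encode (zf m, xf m))))"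
    using comp_iter_simple[OF H assms(2)] assms(3,4) by auto
  then show ?thesis unfolding it by simp
qed

definition comp2 :: "(nat \<Rightarrow> nat \<Rightarrow> nat) \<Rightarrow> bool" where
  "comp2 g \<longleftrightarrow> computable (\<lambda>p. g (pf p) (ps p))"
definition comp3 :: "(nat \<Rightarrow> nat \<Rightarrow> nat \<Rightarrow> nat) \<Rightarrow> bool" where
  "comp3 g \<longleftrightarrow> computable (\<lambda>p. g (pf p) (pf (ps p)) (ps (ps p)))"

lemma comp2_app[intro]:
  assumes "comp2 g" "computable a" "computable b"
  shows "computable (\<lambda>n. g (a n) (b n))"
proof -
  have "computable (\<lambda>n. prod_encode (a n, b n))" by (intro comp_pe assms(2-3))
  from comp_un[OF assms(1)[unfolded comp2_def] this] show ?thesis by simp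
qed

lemma comp3_app[intro]:
  assumes "comp3 g" "computable a" "computable b" "computable c"
  shows "computable (\<lambda>n. g (a n) (b n) (c n))"
proof -
  have "computable (\<lambda>n. prod_encode (a n, prod_encode (b n, c n)))" by (intro comp_pe assms(2-4))
  from comp_un[OF assms(1)[unfolded comp3_def] this] show ?thesis by simp
qed

definition hd_c :: "nat \<Rightarrow> nat" where "hd_c n = pf (n - 1)"
definition tl_c :: "nat \<Rightarrow> nat" where "tl_c n = ps (n - 1)"

lemma hd_c_simp[simp]: "hd_c (list_encode (x # xs)) = x" by (simp add: hd_c_def)
lemma tl_c_simp[simp]: "tl_c (list_encode (x # xs)) = list_encode xs" by (simp add: tl_c_def)
lemma hd_c_cons[simp]: "hd_c (Suc (prod_encode (x, y))) = x" by (simp add: hd_c_def)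
lemma tl_c_cons[simp]: "tl_c (Suc (prod_encode (x, y))) = y" by (simp add: tl_c_def)

lemma comp_hd[intro!]: "computable f \<Longrightarrow> computable (\<lambda>n. hd_c (f n))"
  unfolding hd_c_def by auto
lemma comp_tl[intro!]: "computable f \<Longrightarrow> computable (\<lambda>n. tl_c (f n))"
  unfolding tl_c_def by auto

lemma length_le_list_encode: "length xs \<le> list_encode xs"
proof (induction xs)
  case (Cons x xs)
  then show ?case using le_prod_encode_2[of "list_encode xs" x] by simp
qed simp

lemma mem_lt_list_encode: "x \<in> set xs \<Longrightarrow> x < list_encode xs"
proof (induction xs)
  case (Cons y ys)
  then show ?case using le_prod_encode_1[of y "list_encode ys"] le_prod_encode_2[of "list_encode ys" y]
    by auto
qed simp

definition FS :: "(nat \<Rightarrow> nat \<Rightarrow> nat \<Rightarrow> nat) \<Rightarrow> nat \<Rightarrow> nat \<Rightarrow> nat" where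
  "FS g z s = (if pf s = 0 then s else prod_encode (tl_c (pf s), g z (hd_c (pf s)) (ps s)))"

definition fold_c :: "(nat \<Rightarrow> nat \<Rightarrow> nat \<Rightarrow> nat) \<Rightarrow> nat \<Rightarrow> nat \<Rightarrow> nat \<Rightarrow> nat" where
  "fold_c g z c a = ps ((FS g z ^^ c) (prod_encode (c, a)))"

lemma FS_iter: "length xs \<le> k \<Longrightarrow>
  (FS g z ^^ k) (prod_encode (list_encode xs, a)) = prod_encode (0, foldl (\<lambda>acc x. g z x acc) a xs)"
proof (induction xs arbitrary: k a)
  case Nil
  have "(FS g z ^^ k) (prod_encode (0, a)) = prod_encode (0, a)"
    by (induction k) (auto simp: FS_def)
  then show ?case by simp
next
  case (Cons x xs)
  then obtain k' where k: "k = Suc k'" "length xs \<le> k'" by (cases k) auto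
  have "(FS g z ^^ k) (prod_encode (list_encode (x # xs), a))
       = (FS g z ^^ k') (FS g z (prod_encode (list_encode (x # xs), a)))"
    unfolding k by (simp only: funpow_Suc_right comp_def)
  also have "FS g z (prod_encode (list_encode (x # xs), a)) = prod_encode (list_encode xs, g z x a)"
    by (simp add: FS_def)
  finally show ?case using Cons.IH[OF k(2)] by simp
qed

lemma fold_c_simp[simp]: "fold_c g z (list_encode xs) a = foldl (\<lambda>acc x. g z x acc) a xs"
  unfolding fold_c_def using FS_iter[OF length_le_list_encode] by simp

lemma comp_fold[intro]:
  assumes "comp3 g" "computable zf" "computable cf" "computable af"
  shows "computable (\<lambda>n. fold_c g (zf n) (cf n) (af n))"
proof -
  have "computable (\<lambda>p. FS g (pf p) (ps p))"
    unfolding FS_def by (intro comp_if0 comp_pf comp_ps comp_id comp_pe comp_tl comp3_app[OF assms(1)] comp_hd)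
  then have "computable (\<lambda>n. (FS g (zf n) ^^ cf n) (prod_encode (cf n, af n)))"
    by (rule comp_iter[where G="FS g"]) (rule assms comp_pe)+
  then show ?thesis unfolding fold_c_def by auto
qed

definition rev_c :: "nat \<Rightarrow> nat" where
  "rev_c c = fold_c (\<lambda>z x acc. Suc (prod_encode (x, acc))) 0 c 0"

lemma foldl_cons_code: "foldl (\<lambda>acc x. Suc (prod_encode (x, acc))) (list_encode ys) xs = list_encode (rev xs @ ys)"
proof (induction xs arbitrary: ys)
  case (Cons a xs)
  then show ?case using Cons.IH[of "a # ys"] by simp
qed simp

lemma rev_c_simp[simp]: "rev_c (list_encode xs) = list_encode (rev xs)"
  unfolding rev_c_def using foldl_cons_code[of "[]"] by simp

lemma comp3_cons: "comp3 (\<lambda>z x acc. Suc (prod_encode (x, acc)))"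
  unfolding comp3_def by auto

lemma comp_rev[intro!]: "computable f \<Longrightarrow> computable (\<lambda>n. rev_c (f n))"
  unfolding rev_c_def by (intro comp_fold comp3_cons) auto

definition app_c :: "nat \<Rightarrow> nat \<Rightarrow> nat" where
  "app_c a b = fold_c (\<lambda>z x acc. Suc (prod_encode (x, acc))) 0 (rev_c a) b"

lemma app_c_simp[simp]: "app_c (list_encode xs) (list_encode ys) = list_encode (xs @ ys)"
  unfolding app_c_def using foldl_cons_code by simp

lemma comp_app[intro!]: "computable f \<Longrightarrow> computable g \<Longrightarrow> computable (\<lambda>n. app_c (f n) (g n))"
  unfolding app_c_def by (intro comp_fold comp3_cons) auto

definition map_c :: "(nat \<Rightarrow> nat \<Rightarrow> nat) \<Rightarrow> nat \<Rightarrow> nat \<Rightarrow> nat" where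
  "map_c g z c = rev_c (fold_c (\<lambda>z x acc. Suc (prod_encode (g z x, acc))) z c 0)"

lemma foldl_map_code: "foldl (\<lambda>acc x. Suc (prod_encode (g z x, acc))) (list_encode ys) xs = list_encode (rev (map (g z) xs) @ ys)"
proof (induction xs arbitrary: ys)
  case (Cons a xs)
  then show ?case using Cons.IH[of "g z a # ys"] by simp
qed simp

lemma map_c_simp[simp]: "map_c g z (list_encode xs) = list_encode (map (g z) xs)"
  unfolding map_c_def using foldl_map_code[of g z "[]"] by simp

lemma comp_map[intro]:
  assumes "comp2 g" "computable zf" "computable cf"
  shows "computable (\<lambda>n. map_c g (zf n) (cf n))"
  unfolding map_c_def
  apply (intro comp_rev comp_fold assms comp_const)
  apply (unfold comp3_def)
  by (intro comp_Suc comp_pe comp2_app[OF assms(1)] comp_pf comp_ps comp_id)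

fun truns :: "(nat \<times> act \<times> nat) set \<Rightarrow> cfg \<Rightarrow> act list \<Rightarrow> cfg \<Rightarrow> bool" where
  "truns T c [] c' \<longleftrightarrow> c' = c"
| "truns T c (\<alpha> # \<sigma>) c' \<longleftrightarrow> (\<exists>c''. (fst c, \<alpha>, fst c'') \<in> T \<and> apply_act \<alpha> (snd c) = Some (snd c'') \<and> truns T c'' \<sigma> c')"

lemma runs_truns: "runs M c \<sigma> c' \<longleftrightarrow> truns (set (delta M)) c \<sigma> c'"
  by (induction \<sigma> arbitrary: c) (auto simp: step_def)

lemma truns_append: "truns T c (\<sigma>1 @ \<sigma>2) c' \<longleftrightarrow> (\<exists>c''. truns T c \<sigma>1 c'' \<and> truns T c'' \<sigma>2 c')"
  by (induction \<sigma>1 arbitrary: c) auto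

lemma truns_mono: "truns T c \<sigma> c' \<Longrightarrow> T \<subseteq> T' \<Longrightarrow> truns T' c \<sigma> c'"
  by (induction \<sigma> arbitrary: c) auto

fun chan :: "act \<Rightarrow> nat" where
  "chan (Snd c a) = c" | "chan (Rcv c a) = c"

fun msg :: "act \<Rightarrow> nat" where
  "msg (Snd c a) = a" | "msg (Rcv c a) = a"

fun is_rcv :: "act \<Rightarrow> bool" where
  "is_rcv (Snd c a) = False" | "is_rcv (Rcv c a) = True"

lemma apply_act_length: "apply_act \<alpha> ws = Some ws' \<Longrightarrow> length ws' = length ws \<and> chan \<alpha> < length ws"
  by (cases \<alpha>) (auto split: if_splits list.splits)

lemma truns_length: "truns T c \<sigma> c' \<Longrightarrow> length (snd c') = length (snd c)"
  by (induction \<sigma> arbitrary: c) (auto dest: apply_act_length)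

lemma truns_acts: "truns T c \<sigma> c' \<Longrightarrow> \<alpha> \<in> set \<sigma> \<Longrightarrow> \<exists>s t. (s, \<alpha>, t) \<in> T"
  by (induction \<sigma> arbitrary: c) auto

lemma apply_act_ext: "apply_act \<alpha> ws = Some ws' \<Longrightarrow> apply_act \<alpha> (ws @ vs) = Some (ws' @ vs)"
  by (cases \<alpha>) (auto split: if_splits list.splits simp: nth_append list_update_append)

lemma truns_ext: "truns T (p, ws) \<sigma> (p', ws') \<Longrightarrow> truns T (p, ws @ vs) \<sigma> (p', ws' @ vs)"
proof (induction \<sigma> arbitrary: p ws)
  case (Cons \<alpha> \<sigma>)
  then obtain c'' where "(p, \<alpha>, fst c'') \<in> T" "apply_act \<alpha> ws = Some (snd c'')" "truns T c'' \<sigma> (p', ws')"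
    by auto
  then show ?case using Cons.IH[of "fst c''" "snd c''"] apply_act_ext by (auto intro!: exI[of _ "(fst c'', snd c'' @ vs)"])
qed simp

lemma apply_act_take: "apply_act \<alpha> ws = Some ws' \<Longrightarrow> chan \<alpha> < n \<Longrightarrow> apply_act \<alpha> (take n ws) = Some (take n ws')"
  by (cases \<alpha>) (auto split: if_splits list.splits simp: take_update_swap)

lemma apply_act_take2: "apply_act \<alpha> ws = Some ws' \<Longrightarrow> n \<le> chan \<alpha> \<Longrightarrow> take n ws' = take n ws"
  by (cases \<alpha>) (auto split: if_splits list.splits)

definition strip :: "nat \<Rightarrow> act list \<Rightarrow> act list" where
  "strip n \<sigma> = filter (\<lambda>\<alpha>. chan \<alpha> < n) \<sigma>"

lemma truns_strip:
  assumes "truns T (p, ws) \<sigma> (p', ws')"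
    and "\<forall>(s, \<alpha>, t) \<in> T. (s, \<alpha>, t) \<in> T0 \<or> (n \<le> chan \<alpha> \<and> s = t)"
    and "\<forall>(s, \<alpha>, t) \<in> T0. chan \<alpha> < n"
  shows "truns T0 (p, take n ws) (strip n \<sigma>) (p', take n ws')"
  using assms(1)
proof (induction \<sigma> arbitrary: p ws)
  case Nil
  then show ?case by (simp add: strip_def)
next
  case (Cons \<alpha> \<sigma>)
  then obtain p'' ws'' where tr: "(p, \<alpha>, p'') \<in> T" "apply_act \<alpha> ws = Some ws''" "truns T (p'', ws'') \<sigma> (p', ws')"
    by auto
  note IH = Cons.IH[OF tr(3)]
  show ?case
  proof (cases "chan \<alpha> < n")
    case True
    then have "(p, \<alpha>, p'') \<in> T0" using tr(1) assms(2) by fastforce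
    then show ?thesis using IH True apply_act_take[OF tr(2) True] by (auto simp: strip_def)
  next
    case False
    then have "p'' = p" using tr(1) assms(2,3) by fastforce
    then show ?thesis using IH False apply_act_take2[OF tr(2)] by (auto simp: strip_def)
  qed
qed

lemma proj_send_append[simp]: "proj_send c (\<sigma>1 @ \<sigma>2) = proj_send c \<sigma>1 @ proj_send c \<sigma>2"
  by (induction c \<sigma>1 rule: proj_send.induct) auto

lemma proj_send_strip: "c < n \<Longrightarrow> proj_send c (strip n \<sigma>) = proj_send c \<sigma>"
  unfolding strip_def by (induction c \<sigma> rule: proj_send.induct) auto

lemma proj_send_other: "(\<forall>\<alpha>\<in>set \<sigma>. chan \<alpha> \<noteq> c \<or> is_rcv \<alpha>) \<Longrightarrow> proj_send c \<sigma> = []"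
  by (induction c \<sigma> rule: proj_send.induct) auto

lemma first_exit:
  assumes "truns T c \<sigma> c'" "fst c \<in> S" "fst c' \<notin> S"
  shows "\<exists>\<sigma>1 \<alpha> \<sigma>2 c1 c2. \<sigma> = \<sigma>1 @ \<alpha> # \<sigma>2 \<and> truns (T \<inter> {(s, a, t). s \<in> S \<and> t \<in> S}) c \<sigma>1 c1 \<and>
     fst c1 \<in> S \<and> fst c2 \<notin> S \<and> (fst c1, \<alpha>, fst c2) \<in> T \<and> apply_act \<alpha> (snd c1) = Some (snd c2) \<and>
     truns T c2 \<sigma>2 c'"
  using assms
proof (induction \<sigma> arbitrary: c)
  case Nil
  then show ?case by simp
next
  case (Cons \<alpha> \<sigma>)
  then obtain c'' where tr: "(fst c, \<alpha>, fst c'') \<in> T" "apply_act \<alpha> (snd c) = Some (snd c'')" "truns T c'' \<sigma> c'"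
    by auto
  show ?case
  proof (cases "fst c'' \<in> S")
    case True
    from Cons.IH[OF tr(3) True Cons.prems(3)] obtain \<sigma>1 \<beta> \<sigma>2 c1 c2 where
      h: "\<sigma> = \<sigma>1 @ \<beta> # \<sigma>2" "truns (T \<inter> {(s, a, t). s \<in> S \<and> t \<in> S}) c'' \<sigma>1 c1"
      "fst c1 \<in> S" "fst c2 \<notin> S" "(fst c1, \<beta>, fst c2) \<in> T" "apply_act \<beta> (snd c1) = Some (snd c2)"
      "truns T c2 \<sigma>2 c'" by blast
    show ?thesis
      apply (rule exI[of _ "\<alpha> # \<sigma>1"], rule exI[of _ \<beta>], rule exI[of _ \<sigma>2], rule exI[of _ c1], rule exI[of _ c2])
      using h tr True Cons.prems(2) by auto
  next
    case False
    show ?thesis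
      apply (rule exI[of _ "[]"], rule exI[of _ \<alpha>], rule exI[of _ \<sigma>], rule exI[of _ c], rule exI[of _ c''])
      using tr False Cons.prems(2) by auto
  qed
qed

definition contents_ok :: "fifo \<Rightarrow> nat list list \<Rightarrow> bool" where
  "contents_ok M ws \<longleftrightarrow> (\<forall>c<length ws. set (ws ! c) \<subseteq> set (alph M ! c))"

lemma apply_act_ok: "apply_act \<alpha> ws = Some ws' \<Longrightarrow> \<alpha> \<in> actions M \<Longrightarrow> contents_ok M ws \<Longrightarrow> contents_ok M ws'"
  apply (cases \<alpha>)
   apply (auto split: if_splits list.splits simp: contents_ok_def actions_def nth_list_update)
  by (metis in_set_dropD list.set_intros(2) subsetD drop_Suc_Cons drop0)+

lemma truns_ok: "truns T c \<sigma> c' \<Longrightarrow> set \<sigma> \<subseteq> actions M \<Longrightarrow> contents_ok M (snd c) \<Longrightarrow> contents_ok M (snd c')"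
  by (induction \<sigma> arbitrary: c) (auto dest: apply_act_ok)

lemma init_ok: "contents_ok M (replicate n [])"
  by (simp add: contents_ok_def)

definition A1 :: nfa where "A1 = \<lparr>nstart = [0], ntrans = [(0, 0, 1)], nfinal = [0, 1]\<rparr>"

lemma foldl_empty: "foldl (nfa_step A) {} w = {}"
  by (induction w) (auto simp: nfa_step_def)

lemma nfa_lang_A1: "nfa_lang A1 = {[], [0]}"
proof -
  have "w \<in> nfa_lang A1 \<longleftrightarrow> w = [] \<or> w = [0]" for w
  proof (cases w)
    case Nil then show ?thesis by (auto simp: nfa_lang_def A1_def)
  next
    case (Cons a w')
    have s0: "nfa_step A1 {0} a = (if a = 0 then {1} else {})" by (auto simp: nfa_step_def A1_def)
    show ?thesis
    proof (cases w')
      case Nil then show ?thesis using Cons s0 by (auto simp: nfa_lang_def A1_def)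
    next
      case (Cons b w'')
      have s1: "nfa_step A1 (nfa_step A1 {0} a) b = {}" by (auto simp: nfa_step_def A1_def)
      have "foldl (nfa_step A1) {0} w = {}"
        using Cons \<open>w = a # w'\<close> s1 foldl_empty[of A1] by simp
      moreover have "set (nstart A1) = {0}" by (simp add: A1_def)
      ultimately show ?thesis using Cons \<open>w = a # w'\<close> by (simp add: nfa_lang_def)
    qed
  qed
  then show ?thesis by auto
qed

lemma bounded_A1: "bounded_lang (nfa_lang A1)"
  unfolding bounded_lang_def nfa_lang_A1
  apply (rule exI[of _ "[[0]]"])
  apply auto
   apply (rule exI[of _ "[0]"], simp)
  apply (rule exI[of _ "[1]"], simp)
  done

lemma mem_enc_fifo_states: "p \<in> set (states M) \<Longrightarrow> p < enc_fifo M"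
proof -
  assume "p \<in> set (states M)"
  then have "p < list_encode (states M)" by (rule mem_lt_list_encode)
  also have "list_encode (states M) < enc_fifo M"
    unfolding enc_fifo_def by (rule mem_lt_list_encode) simp
  finally show ?thesis .
qed

lemma actions_chan: "\<alpha> \<in> actions M \<Longrightarrow> chan \<alpha> < nch M"
  by (auto simp: actions_def)

definition extM :: "fifo \<Rightarrow> (nat \<times> act \<times> nat) list \<Rightarrow> nat \<Rightarrow> fifo" where
  "extM M ts D = \<lparr>states = D # states M, nch = Suc (nch M), alph = alph M @ [[0]],
     delta = ts @ delta M, init = init M\<rparr>"

lemma actions_extM:
  assumes "length (alph M) = nch M"
  shows "actions (extM M ts D) = actions M \<union> {Snd (nch M) 0, Rcv (nch M) 0}"
  using assms by (auto simp: actions_def extM_def nth_append less_Suc_eq)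

lemma LsendA_ext:
  assumes "length (alph M) = nch M" "length As = nch M"
  shows "\<sigma> \<in> LsendA (extM M ts D) (As @ [A1]) \<longleftrightarrow>
    set \<sigma> \<subseteq> actions M \<union> {Snd (nch M) 0, Rcv (nch M) 0} \<and>
    (\<forall>c<nch M. proj_send c \<sigma> \<in> nfa_lang (As ! c)) \<and> proj_send (nch M) \<sigma> \<in> {[], [0]}"
  using assms actions_extM[OF assms(1)]
  by (auto simp: LsendA_def Lsend_def extM_def nth_append less_Suc_eq nfa_lang_A1)

lemma strip_actions: "set \<sigma> \<subseteq> actions M \<union> X \<Longrightarrow> (\<forall>\<alpha>\<in>X. nch M \<le> chan \<alpha>) \<Longrightarrow> set (strip (nch M) \<sigma>) \<subseteq> actions M"
  unfolding strip_def by (auto dest!: subsetD)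

lemma valid_langs_ext:
  assumes "valid_langs M As" "length (alph M) = nch M"
  shows "valid_langs (extM M ts D) (As @ [A1])"
  using assms bounded_A1 unfolding valid_langs_def
  by (auto simp: extM_def nth_append less_Suc_eq nfa_lang_A1)

lemma wf_ext:
  assumes "wf_fifo M" "set ts \<subseteq> {(s, a, t). s \<in> set (D # states M) \<and> t \<in> set (D # states M) \<and> a \<in> actions M \<union> {Snd (nch M) 0, Rcv (nch M) 0}}"
  shows "wf_fifo (extM M ts D)"
  using assms actions_extM[of M ts D]
  unfolding wf_fifo_def by (auto simp: extM_def)

definition r3_ts :: "fifo \<Rightarrow> nat \<Rightarrow> (nat \<times> act \<times> nat) list" where
  "r3_ts M q = (q, Snd (nch M) 0, enc_fifo M) # map (\<lambda>p. (p, Snd (nch M) 0, p)) (states M)"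

definition r3 :: "cs_inst \<Rightarrow> dl_inst" where
  "r3 i = (case i of (M, As, q) \<Rightarrow> (extM M (r3_ts M q) (enc_fifo M), As @ [A1]))"

lemma r3_correct:
  assumes "valid_cs i"
  shows "valid_dl (r3 i) \<and> (IB_cs_reach i \<longleftrightarrow> IB_deadlock (r3 i))"
proof -
  obtain M As q where i: "i = (M, As, q)" by (cases i) auto
  let ?n = "nch M" and ?D = "enc_fifo M"
  let ?M' = "extM M (r3_ts M q) ?D"
  have wf: "wf_fifo M" and vl: "valid_langs M As" and q: "q \<in> set (states M)"
    using assms i by (auto simp: valid_cs_def)
  have la: "length (alph M) = ?n" using wf by (simp add: wf_fifo_def)
  have lA: "length As = ?n" using vl by (simp add: valid_langs_def)
  have Dfresh: "?D \<notin> set (states M)" using mem_enc_fifo_states by blast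
  have olds: "\<forall>(s, a, t) \<in> set (delta M). s \<in> set (states M) \<and> t \<in> set (states M) \<and> a \<in> actions M"
    using wf by (auto simp: wf_fifo_def)
  have init: "init M \<in> set (states M)" using wf by (simp add: wf_fifo_def)
  have valid: "valid_dl (r3 i)"
    unfolding r3_def i valid_dl_def
    using wf_ext[OF wf, of "r3_ts M q" ?D] valid_langs_ext[OF vl la] q
    by (auto simp: r3_ts_def)
  have T': "set (delta ?M') = {(q, Snd ?n 0, ?D)} \<union> {(p, Snd ?n 0, p) | p. p \<in> set (states M)} \<union> set (delta M)"
    by (auto simp: extM_def r3_ts_def)
  have init': "init_cfg ?M' = (init M, replicate ?n [] @ [[]])"
    by (simp add: init_cfg_def extM_def replicate_append_same)
  have "IB_cs_reach i \<longleftrightarrow> IB_deadlock (r3 i)"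
  proof
    assume "IB_cs_reach i"
    then obtain ws \<sigma> where \<sigma>: "\<sigma> \<in> LsendA M As" "runs M (init_cfg M) \<sigma> (q, ws)"
      by (auto simp: IB_cs_reach_def i Reach_def)
    let ?\<sigma>' = "\<sigma> @ [Snd ?n 0]"
    have r: "truns (set (delta M)) (init M, replicate ?n []) \<sigma> (q, ws)"
      using \<sigma>(2) by (simp add: runs_truns init_cfg_def)
    have lw: "length ws = ?n" using truns_length[OF r] by simp
    have r': "truns (set (delta ?M')) (init M, replicate ?n [] @ [[]]) \<sigma> (q, ws @ [[]])"
      by (rule truns_mono[OF truns_ext[OF r]]) (auto simp: T')
    have "truns (set (delta ?M')) (q, ws @ [[]]) [Snd ?n 0] (?D, ws @ [[0]])"
      using lw by (auto simp: T' list_update_append nth_append)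
    with r' have run: "runs ?M' (init_cfg ?M') ?\<sigma>' (?D, ws @ [[0]])"
      unfolding runs_truns init' truns_append by blast
    have sa: "set \<sigma> \<subseteq> actions M" and pr: "\<forall>c<?n. proj_send c \<sigma> \<in> nfa_lang (As ! c)"
      using \<sigma>(1) by (auto simp: LsendA_def Lsend_def)
    have "proj_send ?n \<sigma> = []"
      by (rule proj_send_other) (use sa actions_chan in fastforce)
    then have inL: "?\<sigma>' \<in> LsendA ?M' (As @ [A1])"
      unfolding LsendA_ext[OF la lA] using sa pr by (auto simp: proj_send_other)
    have "deadlock ?M' (?D, ws @ [[0]])"
      using Dfresh q olds by (fastforce simp: deadlock_def step_def T')
    then show "IB_deadlock (r3 i)"
      using run inL by (auto simp: IB_deadlock_def r3_def i Reach_def)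
  next
    assume "IB_deadlock (r3 i)"
    then obtain s \<sigma> where s: "\<sigma> \<in> LsendA ?M' (As @ [A1])" "runs ?M' (init_cfg ?M') \<sigma> s" "deadlock ?M' s"
      by (auto simp: IB_deadlock_def r3_def i Reach_def)
    have r: "truns (set (delta ?M')) (init M, replicate ?n [] @ [[]]) \<sigma> s"
      using s(2) init' by (simp add: runs_truns)
    have ls: "length (snd s) = Suc ?n" using truns_length[OF r] by simp
    have "fst s \<notin> set (states M)"
    proof
      assume "fst s \<in> set (states M)"
      then have "step ?M' s (Snd ?n 0) (fst s, (snd s)[?n := snd s ! ?n @ [0]])"
        using ls by (auto simp: step_def T')
      then show False using s(3) by (auto simp: deadlock_def)
    qed
    from first_exit[OF r _ this] init obtain \<sigma>1 \<alpha> \<sigma>2 c1 c2 where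
      ex: "\<sigma> = \<sigma>1 @ \<alpha> # \<sigma>2" "truns (set (delta ?M') \<inter> {(s, a, t). s \<in> set (states M) \<and> t \<in> set (states M)}) (init M, replicate ?n [] @ [[]]) \<sigma>1 c1"
        "fst c1 \<in> set (states M)" "fst c2 \<notin> set (states M)" "(fst c1, \<alpha>, fst c2) \<in> set (delta ?M')"
        "truns (set (delta ?M')) c2 \<sigma>2 s"
      by (metis fst_conv)
    have c1: "fst c1 = q" "\<alpha> = Snd ?n 0" using ex(3-5) olds unfolding T' by auto
    have T0: "\<forall>(s, \<alpha>, t) \<in> set (delta ?M') \<inter> {(s, a, t). s \<in> set (states M) \<and> t \<in> set (states M)}.
        (s, \<alpha>, t) \<in> set (delta M) \<or> (?n \<le> chan \<alpha> \<and> s = t)"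
      using Dfresh unfolding T' by auto
    have T1: "\<forall>(s, \<alpha>, t) \<in> set (delta M). chan \<alpha> < ?n" using olds actions_chan by fastforce
    have st: "truns (set (delta M)) (init M, replicate ?n []) (strip ?n \<sigma>1) (q, take ?n (snd c1))"
      using truns_strip[OF _ T0 T1, of "init M" "replicate ?n [] @ [[]]" \<sigma>1 "fst c1" "snd c1"] ex(2) c1
      by (cases c1) auto
    have sa: "set \<sigma> \<subseteq> actions M \<union> {Snd ?n 0, Rcv ?n 0}" and pr: "\<forall>c<?n. proj_send c \<sigma> \<in> nfa_lang (As ! c)"
      using s(1) unfolding LsendA_ext[OF la lA] by auto
    have "\<sigma>2 = []"
    proof (cases \<sigma>2)
      case (Cons \<beta> \<sigma>3)
      then obtain c3 where "(fst c2, \<beta>, c3) \<in> set (delta ?M')"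
        using ex(6) by auto
      then show ?thesis using c1 ex(3,4,5) q Dfresh olds unfolding T' by auto
    qed simp
    have "\<sigma>1 \<in> LsendA M As \<Longrightarrow> True" by simp
    have sa1: "set (strip ?n \<sigma>1) \<subseteq> actions M"
      by (rule strip_actions[where X="{Snd ?n 0, Rcv ?n 0}"]) (use sa ex(1) in auto)
    have "\<forall>c<?n. proj_send c (strip ?n \<sigma>1) \<in> nfa_lang (As ! c)"
      using pr ex(1) c1 \<open>\<sigma>2 = []\<close> by (auto simp: proj_send_strip)
    then have "strip ?n \<sigma>1 \<in> LsendA M As" using sa1 by (auto simp: LsendA_def Lsend_def)
    then show "IB_cs_reach i"
      using st by (auto simp: IB_cs_reach_def i Reach_def runs_truns init_cfg_def)
  qed
  with valid show ?thesis by simp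
qed

definition drain_step :: "nat \<Rightarrow> nat \<times> (nat \<times> act \<times> nat) list \<Rightarrow> nat list \<Rightarrow> nat \<times> (nat \<times> act \<times> nat) list" where
  "drain_step E = (\<lambda>(k, acc) l. (Suc k, map (\<lambda>a. (E, Rcv k a, E)) l @ acc))"

definition drains :: "nat \<Rightarrow> nat list list \<Rightarrow> (nat \<times> act \<times> nat) list" where
  "drains E als = snd (foldl (drain_step E) (0, []) als)"

lemma drains_foldl: "fst (foldl (drain_step E) (k0, acc0) als) = k0 + length als \<and>
  set (snd (foldl (drain_step E) (k0, acc0) als)) = set acc0 \<union>
    {(E, Rcv c a, E) | c a. k0 \<le> c \<and> c < k0 + length als \<and> a \<in> set (als ! (c - k0))}"
proof (induction als arbitrary: k0 acc0)
  case Nil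
  then show ?case by auto
next
  case (Cons l als)
  have "foldl (drain_step E) (k0, acc0) (l # als) = foldl (drain_step E) (Suc k0, map (\<lambda>a. (E, Rcv k0 a, E)) l @ acc0) als"
    by (simp add: drain_step_def)
  then show ?case using Cons.IH[of "Suc k0"]
    apply (auto simp: nth_Cons')
    by (metis Suc_diff_Suc diff_Suc_Suc not_less_eq_eq nth_Cons_Suc)
qed

lemma set_drains: "set (drains E als) = {(E, Rcv c a, E) | c a. c < length als \<and> a \<in> set (als ! c)}"
  using drains_foldl[of E 0 "[]" als] by (simp add: drains_def)

lemma recv_seq:
  "c < length vs \<Longrightarrow> vs ! c = w @ r \<Longrightarrow> (\<forall>a\<in>set w. (E, Rcv c a, E) \<in> T) \<Longrightarrow>
   truns T (E, vs) (map (Rcv c) w) (E, vs[c := r])"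
proof (induction w arbitrary: vs)
  case Nil
  then show ?case by (metis append_Nil list.simps(8) list_update_id truns.simps(1))
next
  case (Cons a w)
  let ?vs = "vs[c := w @ r]"
  have "truns T (E, ?vs) (map (Rcv c) w) (E, ?vs[c := r])"
    by (rule Cons.IH) (use Cons.prems in auto)
  then show ?case using Cons.prems by (auto intro!: exI[of _ "(E, ?vs)"])
qed

lemma drain_all:
  "m \<le> length vs \<Longrightarrow> (\<forall>c<m. \<forall>a\<in>set (vs ! c). (E, Rcv c a, E) \<in> T) \<Longrightarrow>
   \<exists>\<rho>. truns T (E, vs) \<rho> (E, replicate m [] @ drop m vs) \<and> (\<forall>\<alpha>\<in>set \<rho>. is_rcv \<alpha>)"
proof (induction m)
  case 0
  then show ?case by (auto intro!: exI[of _ "[]"])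
next
  case (Suc m)
  then obtain \<rho> where \<rho>: "truns T (E, vs) \<rho> (E, replicate m [] @ drop m vs)" "\<forall>\<alpha>\<in>set \<rho>. is_rcv \<alpha>"
    by auto
  let ?u = "replicate m [] @ drop m vs"
  have m: "m < length vs" using Suc by simp
  have "?u ! m = vs ! m @ []" using m by (simp add: nth_append)
  then have "truns T (E, ?u) (map (Rcv m) (vs ! m)) (E, ?u[m := []])"
    by (intro recv_seq) (use m Suc.prems in auto)
  moreover have "?u[m := []] = replicate (Suc m) [] @ drop (Suc m) vs"
    using m by (simp add: list_update_append Cons_nth_drop_Suc[symmetric] replicate_append_same)
  ultimately have "truns T (E, vs) (\<rho> @ map (Rcv m) (vs ! m)) (E, replicate (Suc m) [] @ drop (Suc m) vs)"
    using \<rho>(1) truns_append by metis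
  then show ?case using \<rho>(2) by (intro exI[of _ "\<rho> @ map (Rcv m) (vs ! m)"]) auto
qed

lemma truns_from_E:
  "truns T c \<sigma> c' \<Longrightarrow> fst c = E \<Longrightarrow> (\<forall>(s, \<alpha>, t) \<in> T. s = E \<longrightarrow> t = E \<and> is_rcv \<alpha>) \<Longrightarrow> \<forall>\<alpha>\<in>set \<sigma>. is_rcv \<alpha>"
  by (induction \<sigma> arbitrary: c) fastforce+

lemma wf_truns_actions: "wf_fifo M \<Longrightarrow> truns (set (delta M)) c \<sigma> c' \<Longrightarrow> set \<sigma> \<subseteq> actions M"
  by (auto dest!: truns_acts simp: wf_fifo_def)

definition r2_ts :: "fifo \<Rightarrow> nat \<Rightarrow> (nat \<times> act \<times> nat) list" where
  "r2_ts M q = (q, Snd (nch M) 0, enc_fifo M) # drains (enc_fifo M) (alph M @ [[0]])"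

definition r2 :: "cs_inst \<Rightarrow> reach_inst" where
  "r2 i = (case i of (M, As, q) \<Rightarrow> (extM M (r2_ts M q) (enc_fifo M), As @ [A1],
      (enc_fifo M, replicate (Suc (nch M)) [])))"

lemma r2_correct:
  assumes "valid_cs i"
  shows "valid_reach (r2 i) \<and> (IB_cs_reach i \<longleftrightarrow> IB_reach (r2 i))"
proof -
  obtain M As q where i: "i = (M, As, q)" by (cases i) auto
  let ?n = "nch M" and ?E = "enc_fifo M"
  let ?M' = "extM M (r2_ts M q) ?E"
  have wf: "wf_fifo M" and vl: "valid_langs M As" and q: "q \<in> set (states M)"
    using assms i by (auto simp: valid_cs_def)
  have la: "length (alph M) = ?n" using wf by (simp add: wf_fifo_def)
  have lA: "length As = ?n" using vl by (simp add: valid_langs_def)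
  have Efresh: "?E \<notin> set (states M)" using mem_enc_fifo_states by blast
  have olds: "\<forall>(s, a, t) \<in> set (delta M). s \<in> set (states M) \<and> t \<in> set (states M) \<and> a \<in> actions M"
    using wf by (auto simp: wf_fifo_def)
  have init: "init M \<in> set (states M)" using wf by (simp add: wf_fifo_def)
  have T': "set (delta ?M') = {(q, Snd ?n 0, ?E)} \<union>
      {(?E, Rcv c a, ?E) | c a. c < Suc ?n \<and> a \<in> set ((alph M @ [[0]]) ! c)} \<union> set (delta M)"
    by (auto simp: extM_def r2_ts_def set_drains la)
  have wf': "wf_fifo ?M'"
    apply (rule wf_ext[OF wf])
    using q by (auto simp: la r2_ts_def set_drains actions_def nth_append less_Suc_eq)
  have valid: "valid_reach (r2 i)"
    unfolding r2_def i valid_reach_def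
    using wf' valid_langs_ext[OF vl la]
    by (auto simp: is_config_def extM_def simp del: replicate.simps)
  have init': "init_cfg ?M' = (init M, replicate ?n [] @ [[]])"
    by (simp add: init_cfg_def extM_def replicate_append_same)
  have "IB_cs_reach i \<longleftrightarrow> IB_reach (r2 i)"
  proof
    assume "IB_cs_reach i"
    then obtain ws \<sigma> where \<sigma>: "\<sigma> \<in> LsendA M As" "runs M (init_cfg M) \<sigma> (q, ws)"
      by (auto simp: IB_cs_reach_def i Reach_def)
    have r: "truns (set (delta M)) (init M, replicate ?n []) \<sigma> (q, ws)"
      using \<sigma>(2) by (simp add: runs_truns init_cfg_def)
    have lw: "length ws = ?n" using truns_length[OF r] by simp
    have sa: "set \<sigma> \<subseteq> actions M" and pr: "\<forall>c<?n. proj_send c \<sigma> \<in> nfa_lang (As ! c)"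
      using \<sigma>(1) by (auto simp: LsendA_def Lsend_def)
    have ok: "contents_ok M ws" using truns_ok[OF r sa] init_ok by simp
    have r': "truns (set (delta ?M')) (init M, replicate ?n [] @ [[]]) \<sigma> (q, ws @ [[]])"
      by (rule truns_mono[OF truns_ext[OF r]]) (auto simp: T')
    have r2: "truns (set (delta ?M')) (q, ws @ [[]]) [Snd ?n 0] (?E, ws @ [[0]])"
      using lw by (auto simp: T' list_update_append nth_append)
    obtain \<rho> where \<rho>: "truns (set (delta ?M')) (?E, ws @ [[0]]) \<rho> (?E, replicate (Suc ?n) [] @ drop (Suc ?n) (ws @ [[0]]))"
      "\<forall>\<alpha>\<in>set \<rho>. is_rcv \<alpha>"
    proof -
      have all: "\<forall>c<Suc ?n. \<forall>a\<in>set ((ws @ [[0]]) ! c). (?E, Rcv c a, ?E) \<in> set (delta ?M')"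
        using ok lw unfolding T' contents_ok_def by (auto simp: nth_append less_Suc_eq la)
      have le: "Suc ?n \<le> length (ws @ [[0]])" using lw by simp
      show ?thesis using drain_all[OF le all] that by blast
    qed
    have run: "runs ?M' (init_cfg ?M') (\<sigma> @ [Snd ?n 0] @ \<rho>) (?E, replicate (Suc ?n) [])"
    proof -
      have a: "truns (set (delta ?M')) (init M, replicate ?n [] @ [[]]) (\<sigma> @ [Snd ?n 0]) (?E, ws @ [[0]])"
        unfolding truns_append using r' r2 by blast
      have "truns (set (delta ?M')) (init M, replicate ?n [] @ [[]]) ((\<sigma> @ [Snd ?n 0]) @ \<rho>)
          (?E, replicate (Suc ?n) [] @ drop (Suc ?n) (ws @ [[0]]))"
        unfolding truns_append[of _ _ "\<sigma> @ [Snd ?n 0]"] using a \<rho>(1) by blast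
      moreover have "drop (Suc ?n) (ws @ [[0]]) = []" using lw by simp
      ultimately show ?thesis unfolding runs_truns init' by simp
    qed
    have "proj_send ?n \<sigma> = []"
      by (rule proj_send_other) (use sa actions_chan in fastforce)
    moreover have "set \<rho> \<subseteq> actions M \<union> {Snd ?n 0, Rcv ?n 0}"
      using wf_truns_actions[OF wf' \<rho>(1)] actions_extM[OF la] by simp
    moreover have "\<forall>c. proj_send c \<rho> = []" using \<rho>(2) proj_send_other by blast
    ultimately have inL: "\<sigma> @ [Snd ?n 0] @ \<rho> \<in> LsendA ?M' (As @ [A1])"
      unfolding LsendA_ext[OF la lA] using sa pr by auto
    show "IB_reach (r2 i)"
      using run inL by (auto simp: IB_reach_def r2_def i Reach_def)
  next
    assume "IB_reach (r2 i)"
    then obtain \<sigma> where s: "\<sigma> \<in> LsendA ?M' (As @ [A1])" "runs ?M' (init_cfg ?M') \<sigma> (?E, replicate (Suc ?n) [])"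
      by (auto simp: IB_reach_def r2_def i Reach_def)
    have r: "truns (set (delta ?M')) (init M, replicate ?n [] @ [[]]) \<sigma> (?E, replicate (Suc ?n) [])"
      using s(2) init' by (simp add: runs_truns)
    from first_exit[OF r, of "set (states M)"] init Efresh obtain \<sigma>1 \<alpha> \<sigma>2 c1 c2 where
      ex: "\<sigma> = \<sigma>1 @ \<alpha> # \<sigma>2" "truns (set (delta ?M') \<inter> {(s, a, t). s \<in> set (states M) \<and> t \<in> set (states M)}) (init M, replicate ?n [] @ [[]]) \<sigma>1 c1"
        "fst c1 \<in> set (states M)" "fst c2 \<notin> set (states M)" "(fst c1, \<alpha>, fst c2) \<in> set (delta ?M')"
        "truns (set (delta ?M')) c2 \<sigma>2 (?E, replicate (Suc ?n) [])"
      by (metis fst_conv)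
    have c1: "fst c1 = q" "\<alpha> = Snd ?n 0" "fst c2 = ?E" using ex(3-5) olds Efresh unfolding T' by auto
    have T0: "\<forall>(s, \<alpha>, t) \<in> set (delta ?M') \<inter> {(s, a, t). s \<in> set (states M) \<and> t \<in> set (states M)}.
        (s, \<alpha>, t) \<in> set (delta M) \<or> (?n \<le> chan \<alpha> \<and> s = t)"
      using Efresh unfolding T' by auto
    have T1: "\<forall>(s, \<alpha>, t) \<in> set (delta M). chan \<alpha> < ?n" using olds actions_chan by fastforce
    have st: "truns (set (delta M)) (init M, replicate ?n []) (strip ?n \<sigma>1) (q, take ?n (snd c1))"
      using truns_strip[OF _ T0 T1, of "init M" "replicate ?n [] @ [[]]" \<sigma>1 "fst c1" "snd c1"] ex(2) c1
      by (cases c1) auto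
    have sa: "set \<sigma> \<subseteq> actions M \<union> {Snd ?n 0, Rcv ?n 0}" and pr: "\<forall>c<?n. proj_send c \<sigma> \<in> nfa_lang (As ! c)"
      using s(1) unfolding LsendA_ext[OF la lA] by auto
    have "\<forall>\<alpha>\<in>set \<sigma>2. is_rcv \<alpha>"
      by (rule truns_from_E[OF ex(6) c1(3)]) (use Efresh olds q in \<open>auto simp: T'\<close>)
    then have p2: "\<forall>c. proj_send c \<sigma>2 = []" using proj_send_other by blast
    have sa1: "set (strip ?n \<sigma>1) \<subseteq> actions M"
      by (rule strip_actions[where X="{Snd ?n 0, Rcv ?n 0}"]) (use sa ex(1) in auto)
    have "\<forall>c<?n. proj_send c (strip ?n \<sigma>1) \<in> nfa_lang (As ! c)"
      using pr ex(1) c1 p2 by (auto simp: proj_send_strip)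
    then have "strip ?n \<sigma>1 \<in> LsendA M As" using sa1 by (auto simp: LsendA_def Lsend_def)
    then show "IB_cs_reach i"
      using st by (auto simp: IB_cs_reach_def i Reach_def runs_truns init_cfg_def)
  qed
  with valid show ?thesis by simp
qed

section \<open>Marked NFAs\<close>

definition mark :: "nat \<Rightarrow> nfa \<Rightarrow> nfa" where
  "mark h A = \<lparr>nstart = nstart A, ntrans = map (\<lambda>f. (f, h, enc_nfa A)) (nfinal A) @ ntrans A,
     nfinal = [enc_nfa A]\<rparr>"

definition tr_code :: "nat \<times> nat \<times> nat \<Rightarrow> nat" where
  "tr_code = (\<lambda>(q, a, q'). prod_encode (q, prod_encode (a, q')))"

lemma enc_nfa_fresh:
  shows "enc_nfa A \<notin> set (nstart A)" "enc_nfa A \<notin> set (nfinal A)"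
    "\<forall>(s, a, t) \<in> set (ntrans A). s \<noteq> enc_nfa A \<and> t \<noteq> enc_nfa A"
proof -
  have e: "enc_nfa A = list_encode [list_encode (nstart A), list_encode (map tr_code (ntrans A)), list_encode (nfinal A)]"
    by (simp add: enc_nfa_def tr_code_def)
  have b1: "list_encode (nstart A) < enc_nfa A" unfolding e by (rule mem_lt_list_encode) simp
  have b2: "list_encode (map tr_code (ntrans A)) < enc_nfa A" unfolding e by (rule mem_lt_list_encode) simp
  have b3: "list_encode (nfinal A) < enc_nfa A" unfolding e by (rule mem_lt_list_encode) simp
  show "enc_nfa A \<notin> set (nstart A)"
  proof
    assume "enc_nfa A \<in> set (nstart A)"
    then have "enc_nfa A < list_encode (nstart A)" by (rule mem_lt_list_encode)
    with b1 show False by simp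
  qed
  show "enc_nfa A \<notin> set (nfinal A)"
  proof
    assume "enc_nfa A \<in> set (nfinal A)"
    then have "enc_nfa A < list_encode (nfinal A)" by (rule mem_lt_list_encode)
    with b3 show False by simp
  qed
  show "\<forall>(s, a, t) \<in> set (ntrans A). s \<noteq> enc_nfa A \<and> t \<noteq> enc_nfa A"
  proof (intro ballI, clarify)
    fix s a t assume "(s, a, t) \<in> set (ntrans A)"
    then have m: "tr_code (s, a, t) \<in> set (map tr_code (ntrans A))" by force
    have "tr_code (s, a, t) < enc_nfa A" using mem_lt_list_encode[OF m] b2 by (rule less_trans)
    moreover have "s \<le> tr_code (s, a, t)" by (simp add: tr_code_def le_prod_encode_1)
    moreover have "t \<le> tr_code (s, a, t)"
      using le_prod_encode_2[of t a] le_prod_encode_2[of "prod_encode (a, t)" s] by (simp add: tr_code_def)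
    ultimately show "s \<noteq> enc_nfa A \<and> t \<noteq> enc_nfa A" by auto
  qed
qed

lemma nfa_lang_mark: "nfa_lang (mark h A) = {u @ [h] | u. u \<in> nfa_lang A}"
proof -
  let ?F = "enc_nfa A"
  let ?s' = "nfa_step (mark h A)" and ?s = "nfa_step A"
  note fr = enc_nfa_fresh[of A]
  have st: "?s' S a = ?s S a \<union> (if a = h \<and> S \<inter> set (nfinal A) \<noteq> {} then {?F} else {})" for S a
    by (auto simp: nfa_step_def mark_def)
  have sF: "?s S a = ?s (S - {?F}) a" for S a
    using fr(3) by (auto simp: nfa_step_def)
  have Fn: "?F \<notin> ?s S a" for S a
    using fr(3) by (auto simp: nfa_step_def)
  have fo: "foldl ?s' S w - {?F} = foldl ?s (S - {?F}) w" for S w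
  proof (induction w arbitrary: S)
    case (Cons a w)
    have "?s' S a - {?F} = ?s (S - {?F}) a" using st sF Fn by auto
    then show ?case using Cons.IH[of "?s' S a"] by simp
  qed simp
  have last: "?F \<in> foldl ?s' S (w @ [a]) \<longleftrightarrow> a = h \<and> foldl ?s (S - {?F}) w \<inter> set (nfinal A) \<noteq> {}" for S w a
  proof -
    have "foldl ?s' S w \<inter> set (nfinal A) = (foldl ?s' S w - {?F}) \<inter> set (nfinal A)" using fr(2) by auto
    then show ?thesis using st Fn fo by auto
  qed
  have S0: "set (nstart A) - {?F} = set (nstart A)" using fr(1) by auto
  have "w \<in> nfa_lang (mark h A) \<longleftrightarrow> (\<exists>u. w = u @ [h] \<and> u \<in> nfa_lang A)" for w
  proof (cases w rule: rev_cases)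
    case Nil
    then show ?thesis using fr(1) by (auto simp: nfa_lang_def mark_def)
  next
    case (snoc u a)
    have "w \<in> nfa_lang (mark h A) \<longleftrightarrow> ?F \<in> foldl ?s' (set (nstart A)) (u @ [a])"
      using snoc by (auto simp: nfa_lang_def mark_def)
    also have "\<dots> \<longleftrightarrow> a = h \<and> u \<in> nfa_lang A" unfolding last S0 by (simp add: nfa_lang_def)
    finally show ?thesis using snoc by auto
  qed
  then show ?thesis by auto
qed

lemma concat_zip_snoc: "length ks = length ws \<Longrightarrow>
  concat (map (\<lambda>(w, k). concat (replicate k w)) (zip (ws @ [v]) (ks @ [1]))) =
  concat (map (\<lambda>(w, k). concat (replicate k w)) (zip ws ks)) @ v"
  by simp

lemma bounded_mark: "bounded_lang L \<Longrightarrow> h \<noteq> 0 \<or> True \<Longrightarrow> bounded_lang {u @ [h] | u. u \<in> L}"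
proof -
  assume "bounded_lang L"
  then obtain ws where ws: "\<forall>w\<in>set ws. w \<noteq> []"
    "\<forall>u\<in>L. \<exists>ks. length ks = length ws \<and> u = concat (map (\<lambda>(w, k). concat (replicate k w)) (zip ws ks))"
    unfolding bounded_lang_def by blast
  show ?thesis unfolding bounded_lang_def
  proof (intro exI[of _ "ws @ [[h]]"] conjI ballI)
    show "w \<noteq> []" if "w \<in> set (ws @ [[h]])" for w using that ws(1) by auto
    fix u' assume "u' \<in> {u @ [h] |u. u \<in> L}"
    then obtain u where u: "u' = u @ [h]" "u \<in> L" by blast
    then obtain ks where ks: "length ks = length ws" "u = concat (map (\<lambda>(w, k). concat (replicate k w)) (zip ws ks))"
      using ws(2) by blast
    show "\<exists>ks. length ks = length (ws @ [[h]]) \<and> u' = concat (map (\<lambda>(w, k). concat (replicate k w)) (zip (ws @ [[h]]) ks))"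
      by (rule exI[of _ "ks @ [1]"]) (use ks u concat_zip_snoc[OF ks(1)] in auto)
  qed
qed

section \<open>Gadget actions\<close>

fun exec :: "act list \<Rightarrow> nat list list \<Rightarrow> nat list list option" where
  "exec [] v = Some v"
| "exec (\<alpha> # \<sigma>) v = (case apply_act \<alpha> v of None \<Rightarrow> None | Some u \<Rightarrow> exec \<sigma> u)"

lemma exec_append: "exec (a @ b) v = (case exec a v of None \<Rightarrow> None | Some u \<Rightarrow> exec b u)"
  by (induction a arbitrary: v) (auto split: option.splits)

definition gact :: "nat \<Rightarrow> nat \<Rightarrow> nat list \<Rightarrow> act list" where
  "gact h k w = Snd k h # map (Rcv k) w @ [Rcv k h]"

fun gacts :: "nat \<Rightarrow> nat \<Rightarrow> nat list list \<Rightarrow> act list" where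
  "gacts h k [] = []"
| "gacts h k (w # ws) = gact h k w @ gacts h (Suc k) ws"

lemma exec_rcvs: "c < length u \<Longrightarrow> u ! c = w @ r \<Longrightarrow> exec (map (Rcv c) w) u = Some (u[c := r])"
proof (induction w arbitrary: u)
  case Nil then show ?case by (metis append_Nil exec.simps(1) list.simps(8) list_update_id)
next
  case (Cons a w)
  then show ?case using Cons.IH[of "u[c := w @ r]"] by auto
qed

lemma exec_rcvs_back: "exec (map (Rcv c) w) u = Some u' \<Longrightarrow> c < length u \<Longrightarrow> (\<exists>r. u ! c = w @ r \<and> u' = u[c := r])"
proof (induction w arbitrary: u)
  case Nil
  then show ?case by auto
next
  case (Cons a w)
  then obtain u1 where u1: "apply_act (Rcv c a) u = Some u1" "exec (map (Rcv c) w) u1 = Some u'"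
    by (auto split: option.splits)
  then obtain r1 where r1: "c < length u" "u ! c = a # r1" "u1 = u[c := r1]"
    by (auto split: if_splits list.splits)
  from Cons.IH[OF u1(2)] r1 obtain r where "u1 ! c = w @ r" "u' = u1[c := r]" by auto
  then show ?case using r1 by auto
qed

lemma snoc_marker: "x @ [h] = w @ h # r \<Longrightarrow> h \<notin> set x \<Longrightarrow> h \<notin> set w \<Longrightarrow> x = w \<and> r = []"
proof (induction x arbitrary: w)
  case Nil
  then show ?case by (cases w) auto
next
  case (Cons a x)
  then show ?case by (cases w) auto
qed

lemma gact_fwd: "c < length v \<Longrightarrow> v ! c = w \<Longrightarrow> exec (gact h c w) v = Some (v[c := []])"
proof -
  assume a: "c < length v" "v ! c = w"
  let ?u = "v[c := w @ [h]]"
  have "exec (map (Rcv c) w) ?u = Some (?u[c := [h]])" by (rule exec_rcvs) (use a in auto)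
  then show ?thesis using a by (simp add: gact_def exec_append)
qed

lemma gact_back: "exec (gact h c w) v = Some v' \<Longrightarrow> h \<notin> set (v ! c) \<Longrightarrow> h \<notin> set w \<Longrightarrow>
   c < length v \<and> v ! c = w \<and> v' = v[c := []]"
proof -
  assume e: "exec (gact h c w) v = Some v'" and h: "h \<notin> set (v ! c)" "h \<notin> set w"
  from e have c: "c < length v" by (auto simp: gact_def split: if_splits)
  let ?u = "v[c := v ! c @ [h]]"
  from e c obtain u' where u': "exec (map (Rcv c) w) ?u = Some u'" "exec [Rcv c h] u' = Some v'"
    by (auto simp: gact_def exec_append split: option.splits)
  from exec_rcvs_back[OF u'(1)] c obtain r where r: "v ! c @ [h] = w @ r" "u' = ?u[c := r]" by auto
  from u'(2) r c obtain r' where r': "r = h # r'" "v' = ?u[c := r']"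
    by (auto split: list.splits if_splits)
  from snoc_marker[of "v ! c" h w r'] r r' h have "v ! c = w" "r' = []" by auto
  then show ?thesis using c r' by simp
qed

lemma gacts_fwd: "(\<forall>j<length ws. k + j < length v \<and> v ! (k + j) = ws ! j) \<Longrightarrow> \<exists>v'. exec (gacts h k ws) v = Some v'"
proof (induction ws arbitrary: k v)
  case Nil then show ?case by simp
next
  case (Cons w ws)
  have g: "exec (gact h k w) v = Some (v[k := []])" by (rule gact_fwd) (use Cons.prems in force)+
  have "\<exists>v'. exec (gacts h (Suc k) ws) (v[k := []]) = Some v'"
    by (rule Cons.IH) (use Cons.prems in \<open>force simp: nth_list_update\<close>)
  then show ?case using g by (simp add: exec_append)
qed

lemma gacts_back: "exec (gacts h k ws) v = Some v' \<Longrightarrow>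
  (\<forall>j<length ws. h \<notin> set (ws ! j) \<and> (k + j < length v \<longrightarrow> h \<notin> set (v ! (k + j)))) \<Longrightarrow>
  \<forall>j<length ws. k + j < length v \<and> v ! (k + j) = ws ! j"
proof (induction ws arbitrary: k v)
  case Nil then show ?case by simp
next
  case (Cons w ws)
  from Cons.prems(1) obtain u where u: "exec (gact h k w) v = Some u" "exec (gacts h (Suc k) ws) u = Some v'"
    by (auto simp: exec_append split: option.splits)
  have k: "k < length v" using u(1) by (auto simp: gact_def split: if_splits)
  from gact_back[OF u(1)] Cons.prems(2) k have g: "v ! k = w" "u = v[k := []]" by force+
  have "\<forall>j<length ws. Suc k + j < length u \<and> u ! (Suc k + j) = ws ! j"
    by (rule Cons.IH[OF u(2)]) (use Cons.prems(2) g in \<open>force simp: nth_list_update\<close>)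
  note IHr = this
  show ?case
  proof (intro allI impI)
    fix j assume j: "j < length (w # ws)"
    show "k + j < length v \<and> v ! (k + j) = (w # ws) ! j"
    proof (cases j)
      case 0 then show ?thesis using g k by simp
    next
      case (Suc j')
      then have "j' < length ws" using j by simp
      from IHr[rule_format, OF this] g show ?thesis using Suc by (simp add: nth_list_update)
    qed
  qed
qed

lemma proj_gact: "proj_send c (gact h k w) = (if c = k then [h] else [])"
  unfolding gact_def by (induction w) auto

lemma proj_gacts: "proj_send c (gacts h k ws) = (if k \<le> c \<and> c < k + length ws then [h] else [])"
  by (induction ws arbitrary: k) (auto simp: proj_gact)

lemma set_gacts: "\<alpha> \<in> set (gacts h k ws) \<Longrightarrow>
   \<exists>j<length ws. \<alpha> = Snd (k + j) h \<or> \<alpha> = Rcv (k + j) h \<or> (\<exists>a\<in>set (ws ! j). \<alpha> = Rcv (k + j) a)"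
proof (induction ws arbitrary: k)
  case Nil then show ?case by simp
next
  case (Cons w ws)
  show ?case
  proof (cases "\<alpha> \<in> set (gact h k w)")
    case True then show ?thesis by (auto simp: gact_def)
  next
    case False
    then have "\<alpha> \<in> set (gacts h (Suc k) ws)" using Cons.prems by simp
    from Cons.IH[OF this] obtain j where "j < length ws"
      "\<alpha> = Snd (Suc k + j) h \<or> \<alpha> = Rcv (Suc k + j) h \<or> (\<exists>a\<in>set (ws ! j). \<alpha> = Rcv (Suc k + j) a)" by blast
    then show ?thesis by (intro exI[of _ "Suc j"]) auto
  qed
qed

lemma gacts_Nil: "gacts h k ws = [] \<longleftrightarrow> ws = []"
  by (cases ws) (auto simp: gact_def)

section \<open>Chains\<close>

definition chain_step :: "nat \<Rightarrow> nat \<Rightarrow> nat \<times> (nat \<times> act \<times> nat) list \<Rightarrow> act \<Rightarrow> nat \<times> (nat \<times> act \<times> nat) list" where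
  "chain_step q B = (\<lambda>(i, acc) a. (Suc i, (if i = 0 then q else B + i, a, B + Suc i) # acc))"

definition chain :: "nat \<Rightarrow> nat \<Rightarrow> act list \<Rightarrow> (nat \<times> act \<times> nat) list" where
  "chain q B acts = snd (foldl (chain_step q B) (0, []) acts)"

lemma chain_foldl: "fst (foldl (chain_step q B) (i0, acc) as) = i0 + length as \<and>
  set (snd (foldl (chain_step q B) (i0, acc) as)) = set acc \<union>
    {(if i0 + j = 0 then q else B + (i0 + j), as ! j, B + Suc (i0 + j)) | j. j < length as}"
proof (induction as arbitrary: i0 acc)
  case Nil then show ?case by simp
next
  case (Cons a as)
  have "foldl (chain_step q B) (i0, acc) (a # as) = foldl (chain_step q B) (Suc i0, (if i0 = 0 then q else B + i0, a, B + Suc i0) # acc) as"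
    by (simp add: chain_step_def)
  moreover have "{g j | j. j < Suc n} = {g 0} \<union> {g (Suc j) | j. j < n}" for g :: "nat \<Rightarrow> nat \<times> act \<times> nat" and n
    by (auto simp: less_Suc_eq_0_disj)
  ultimately show ?case using Cons.IH[of "Suc i0"] by (simp add: Un_ac)
qed

lemma set_chain: "set (chain q B acts) = {(if i = 0 then q else B + i, acts ! i, B + Suc i) | i. i < length acts}"
  using chain_foldl[of q B 0 "[]" acts] by (simp add: chain_def)

lemma chain_run:
  assumes "set (chain q B acts) \<subseteq> T"
  shows "i \<le> length acts \<Longrightarrow> exec (drop i acts) v = Some v' \<Longrightarrow>
    truns T (if i = 0 then q else B + i, v) (drop i acts) (if length acts = 0 then q else B + length acts, v')"
proof (induction "length acts - i" arbitrary: i v)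
  case 0
  then have "i = length acts" by simp
  then show ?case using 0 by auto
next
  case (Suc x)
  then have i: "i < length acts" by simp
  then have d: "drop i acts = acts ! i # drop (Suc i) acts" by (simp add: Cons_nth_drop_Suc)
  from Suc.prems(2) obtain u where u: "apply_act (acts ! i) v = Some u" "exec (drop (Suc i) acts) u = Some v'"
    unfolding d by (auto split: option.splits)
  have tr: "(if i = 0 then q else B + i, acts ! i, B + Suc i) \<in> T"
    using assms i by (auto simp: set_chain)
  have "truns T (if Suc i = 0 then q else B + Suc i, u) (drop (Suc i) acts) (if length acts = 0 then q else B + length acts, v')"
    by (rule Suc.hyps(1)) (use Suc.hyps(2) i u in auto)
  then show ?case unfolding d using tr u(1) by (auto intro!: exI[of _ "(B + Suc i, u)"])
qed

lemma chain_follow: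
  assumes T: "T = set (chain q B acts) \<union> Ot" and Ot: "\<forall>(s, a, t) \<in> Ot. s < B" and q: "q < B"
  shows "truns T (B + i, u) \<sigma> (B + length acts, v) \<Longrightarrow> 1 \<le> i \<Longrightarrow> i \<le> length acts \<Longrightarrow>
    \<sigma> = drop i acts \<and> exec \<sigma> u = Some v"
proof (induction \<sigma> arbitrary: i u)
  case Nil
  then show ?case by auto
next
  case (Cons \<alpha> \<sigma>)
  then obtain c'' where c'': "(B + i, \<alpha>, fst c'') \<in> T" "apply_act \<alpha> u = Some (snd c'')" "truns T c'' \<sigma> (B + length acts, v)"
    by auto
  from c''(1) Ot q obtain j where j: "j < length acts" "(if j = 0 then q else B + j) = B + i" "\<alpha> = acts ! j" "fst c'' = B + Suc j"
    unfolding T set_chain by fastforce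
  have ji: "j = i" using j(2) q Cons.prems(2) by (auto split: if_splits)
  have "\<sigma> = drop (Suc i) acts \<and> exec \<sigma> (snd c'') = Some v"
    by (rule Cons.IH) (use c'' j ji in \<open>auto\<close>, metis prod.collapse)
  moreover have "drop i acts = acts ! i # drop (Suc i) acts" using ji j by (simp add: Cons_nth_drop_Suc)
  ultimately show ?case using ji j c''(2) by auto
qed

definition r1M :: "fifo \<Rightarrow> nat \<Rightarrow> nat list list \<Rightarrow> fifo" where
  "r1M M q ws = \<lparr>states = map (\<lambda>(s, a, t). t) (chain q (enc_fifo M) (gacts (enc_fifo M) 0 ws)) @ states M,
     nch = nch M, alph = map (\<lambda>l. enc_fifo M # l) (alph M),
     delta = chain q (enc_fifo M) (gacts (enc_fifo M) 0 ws) @ delta M, init = init M\<rparr>"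

definition r1 :: "reach_inst \<Rightarrow> cs_inst" where
  "r1 i = (case i of (M, As, (q, ws)) \<Rightarrow> (r1M M q ws, map (mark (enc_fifo M)) As,
      if ws = [] then q else enc_fifo M + length (gacts (enc_fifo M) 0 ws)))"

lemma alph_lt_enc: "c < length (alph M) \<Longrightarrow> a \<in> set (alph M ! c) \<Longrightarrow> a < enc_fifo M"
proof -
  assume c: "c < length (alph M)" and a: "a \<in> set (alph M ! c)"
  have "a < list_encode (alph M ! c)" using a by (rule mem_lt_list_encode)
  also have "list_encode (alph M ! c) < enc_nll (alph M)"
    unfolding enc_nll_def by (rule mem_lt_list_encode) (use c in auto)
  also have "enc_nll (alph M) < enc_fifo M"
    unfolding enc_fifo_def by (rule mem_lt_list_encode) simp
  finally show ?thesis .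
qed

lemma r1_correct:
  assumes "valid_reach i"
  shows "valid_cs (r1 i) \<and> (IB_reach i \<longleftrightarrow> IB_cs_reach (r1 i))"
proof -
  obtain M As q ws where i: "i = (M, As, (q, ws))" by (cases i) auto
  let ?n = "nch M" and ?h = "enc_fifo M"
  let ?acts = "gacts ?h 0 ws"
  let ?ch = "chain q ?h ?acts"
  let ?K = "length ?acts"
  let ?M' = "r1M M q ws" and ?As' = "map (mark ?h) As"
  let ?T = "if ws = [] then q else ?h + ?K"
  have wf: "wf_fifo M" and vl: "valid_langs M As" and cfg: "is_config M (q, ws)"
    using assms i by (auto simp: valid_reach_def)
  have q: "q \<in> set (states M)" and lw: "length ws = ?n" and wsa: "\<forall>c<?n. set (ws ! c) \<subseteq> set (alph M ! c)"
    using cfg by (auto simp: is_config_def)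
  have la: "length (alph M) = ?n" using wf by (simp add: wf_fifo_def)
  have lA: "length As = ?n" using vl by (simp add: valid_langs_def)
  have olds: "\<forall>(s, a, t) \<in> set (delta M). s \<in> set (states M) \<and> t \<in> set (states M) \<and> a \<in> actions M"
    using wf by (auto simp: wf_fifo_def)
  have init: "init M \<in> set (states M)" using wf by (simp add: wf_fifo_def)
  have stlt: "\<And>p. p \<in> set (states M) \<Longrightarrow> p < ?h" using mem_enc_fifo_states by blast
  have qlt: "q < ?h" using stlt q by blast
  have hnot: "\<And>c. c < ?n \<Longrightarrow> ?h \<notin> set (alph M ! c)" using alph_lt_enc[of _ M ?h] la by (metis less_irrefl)
  have hws: "\<And>c. c < ?n \<Longrightarrow> ?h \<notin> set (ws ! c)" using hnot wsa by blast
  have T': "set (delta ?M') = set ?ch \<union> set (delta M)" by (simp add: r1M_def)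
  have act': "actions ?M' = {Snd c a | c a. c < ?n \<and> a \<in> set (?h # alph M ! c)} \<union> {Rcv c a | c a. c < ?n \<and> a \<in> set (?h # alph M ! c)}"
    by (auto simp: actions_def r1M_def la)
  have actsub: "actions M \<subseteq> actions ?M'" unfolding act' by (auto simp: actions_def)
  have actsacts: "set ?acts \<subseteq> actions ?M'"
  proof
    fix \<alpha> assume "\<alpha> \<in> set ?acts"
    from set_gacts[OF this] obtain j where "j < length ws"
      "\<alpha> = Snd j ?h \<or> \<alpha> = Rcv j ?h \<or> (\<exists>a\<in>set (ws ! j). \<alpha> = Rcv j a)" by auto
    then show "\<alpha> \<in> actions ?M'" unfolding act' using lw wsa by (auto; meson subsetD)
  qed
  have nM': "nch ?M' = ?n" by (simp add: r1M_def)
  have nl: "\<And>c. c < ?n \<Longrightarrow> nfa_lang (?As' ! c) = {u @ [?h] | u. u \<in> nfa_lang (As ! c)}"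
    using lA by (simp add: nfa_lang_mark)
  have Lsend': "\<sigma> \<in> LsendA ?M' ?As' \<longleftrightarrow> set \<sigma> \<subseteq> actions ?M' \<and>
      (\<forall>c<?n. proj_send c \<sigma> \<in> {u @ [?h] | u. u \<in> nfa_lang (As ! c)})" for \<sigma>
    unfolding LsendA_def Lsend_def mem_Collect_eq nM' by (simp add: nl)
  have projacts: "\<And>c. c < ?n \<Longrightarrow> proj_send c ?acts = [?h]" using lw by (simp add: proj_gacts)
  have init': "init_cfg ?M' = init_cfg M" by (simp add: init_cfg_def r1M_def)
  have Knz: "?acts = [] \<longleftrightarrow> ws = []" by (rule gacts_Nil)
  have st': "set (states ?M') = (\<lambda>(s, a, t). t) ` set ?ch \<union> set (states M)" by (simp add: r1M_def)
  have chst: "?h + Suc i \<in> set (states ?M')" if i: "i < ?K" for i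
  proof -
    have "(if i = 0 then q else ?h + i, ?acts ! i, ?h + Suc i) \<in> set ?ch" unfolding set_chain using i by blast
    then have "(\<lambda>(s, a, t). t) (if i = 0 then q else ?h + i, ?acts ! i, ?h + Suc i) \<in> (\<lambda>(s, a, t). t) ` set ?ch"
      by (rule imageI)
    then show ?thesis unfolding st' by simp
  qed
  have wf': "wf_fifo ?M'"
  proof -
    have "(s, a, t) \<in> set (delta ?M') \<Longrightarrow> s \<in> set (states ?M') \<and> t \<in> set (states ?M') \<and> a \<in> actions ?M'" for s a t
    proof -
      assume st: "(s, a, t) \<in> set (delta ?M')"
      show ?thesis
      proof (cases "(s, a, t) \<in> set (delta M)")
        case True then show ?thesis using olds actsub unfolding st' by blast
      next
        case False
        then obtain j where j: "j < ?K" "s = (if j = 0 then q else ?h + j)" "a = ?acts ! j" "t = ?h + Suc j"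
          using st unfolding T' set_chain by auto
        have "s \<in> set (states ?M')"
        proof (cases j)
          case 0 then show ?thesis using j q st' by auto
        next
          case (Suc j') then show ?thesis using j chst[of j'] by auto
        qed
        moreover have "a \<in> actions ?M'" using j actsacts by auto
        ultimately show ?thesis using j chst by auto
      qed
    qed
    then have A: "\<forall>(s, a, t) \<in> set (delta ?M'). s \<in> set (states ?M') \<and> t \<in> set (states ?M') \<and> a \<in> actions ?M'"
      by blast
    have l: "length (alph ?M') = nch ?M'" by (simp add: r1M_def la)
    have ii: "init ?M' \<in> set (states ?M')" by (simp add: r1M_def init)
    show ?thesis unfolding wf_fifo_def using A l ii by blast
  qed
  have vl': "valid_langs ?M' ?As'"
    unfolding valid_langs_def
  proof (intro conjI allI impI)
    show "length ?As' = nch ?M'" using lA by (simp add: r1M_def)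
    fix c assume "c < nch ?M'"
    then have c: "c < ?n" by (simp add: r1M_def)
    have L: "nfa_lang (?As' ! c) = {u @ [?h] | u. u \<in> nfa_lang (As ! c)}" using c lA by (simp add: nfa_lang_mark)
    show "nfa_lang (?As' ! c) \<noteq> {}" using vl c unfolding L valid_langs_def by auto
    show "bounded_lang (nfa_lang (?As' ! c))" using vl c bounded_mark unfolding L valid_langs_def by blast
    show "nfa_lang (?As' ! c) \<subseteq> lists (set (alph ?M' ! c))"
      unfolding L
    proof
      fix w assume "w \<in> {u @ [?h] | u. u \<in> nfa_lang (As ! c)}"
      then obtain u where u: "w = u @ [?h]" "u \<in> nfa_lang (As ! c)" by blast
      have "nfa_lang (As ! c) \<subseteq> lists (set (alph M ! c))" using vl c by (simp add: valid_langs_def)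
      then have "u \<in> lists (set (alph M ! c))" using u(2) by blast
      then show "w \<in> lists (set (alph ?M' ! c))" using u(1) c la by (auto simp: r1M_def)
    qed
  qed
  have Tst: "?T \<in> set (states ?M')"
  proof (cases "ws = []")
    case True then show ?thesis using q st' by auto
  next
    case False
    then have "?K > 0" using Knz by auto
    then have "?h + Suc (?K - 1) \<in> set (states ?M')" using chst[of "?K - 1"] by simp
    then show ?thesis using False \<open>?K > 0\<close> by simp
  qed
  have valid: "valid_cs (r1 i)" unfolding r1_def i valid_cs_def using wf' vl' Tst by simp
  have "IB_reach i \<longleftrightarrow> IB_cs_reach (r1 i)"
  proof
    assume "IB_reach i"
    then obtain \<sigma> where \<sigma>: "\<sigma> \<in> LsendA M As" "runs M (init_cfg M) \<sigma> (q, ws)"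
      by (auto simp: IB_reach_def i Reach_def)
    have r: "truns (set (delta ?M')) (init_cfg M) \<sigma> (q, ws)"
      using \<sigma>(2) truns_mono by (auto simp: runs_truns T')
    obtain v' where v': "exec ?acts ws = Some v'" using gacts_fwd[of ws 0 ws ?h] by auto
    have "truns (set (delta ?M')) (q, ws) ?acts (if ?K = 0 then q else ?h + ?K, v')"
      using chain_run[of q ?h ?acts "set (delta ?M')" 0 ws v'] v' by (simp add: T')
    then have r2: "truns (set (delta ?M')) (q, ws) ?acts (?T, v')" using Knz by simp
    have run: "runs ?M' (init_cfg ?M') (\<sigma> @ ?acts) (?T, v')"
      unfolding runs_truns init' truns_append using r r2 by blast
    have sa: "set \<sigma> \<subseteq> actions M" and pr: "\<forall>c<?n. proj_send c \<sigma> \<in> nfa_lang (As ! c)"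
      using \<sigma>(1) by (auto simp: LsendA_def Lsend_def)
    have "\<sigma> @ ?acts \<in> LsendA ?M' ?As'"
      unfolding Lsend' using sa actsub actsacts pr projacts by auto
    then have "(?T, v') \<in> Reach ?M' (LsendA ?M' ?As')"
      using run unfolding Reach_def by blast
    then show "IB_cs_reach (r1 i)"
      unfolding IB_cs_reach_def r1_def i by auto
  next
    assume "IB_cs_reach (r1 i)"
    then obtain v \<sigma>' where s: "\<sigma>' \<in> LsendA ?M' ?As'" "runs ?M' (init_cfg ?M') \<sigma>' (?T, v)"
      by (auto simp: IB_cs_reach_def r1_def i Reach_def)
    show "IB_reach i"
    proof (cases "ws = []")
      case True
      then have n0: "?n = 0" using lw by simp
      have ch0: "?ch = []" using True by (simp add: chain_def)
      have d0: "set (delta ?M') = set (delta M)" using T' ch0 by simp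
      have r: "runs M (init_cfg M) \<sigma>' (q, v)"
        using s(2) True unfolding runs_truns init' d0 by simp
      have "length v = 0" using truns_length[OF r[unfolded runs_truns]] n0 by (simp add: init_cfg_def)
      moreover have "actions ?M' = {}" using n0 unfolding act' by simp
      moreover have "\<sigma>' \<in> LsendA M As"
        using s(1) n0 \<open>actions ?M' = {}\<close> by (auto simp: LsendA_def Lsend_def)
      ultimately show ?thesis using r True unfolding IB_reach_def i Reach_def by auto
    next
      case False
      then have Kpos: "?K > 0" using Knz by auto
      have Tns: "?T \<notin> set (states M)"
      proof
        assume "?T \<in> set (states M)"
        then have "?T < ?h" by (rule stlt)
        with False show False by simp
      qed
      have r: "truns (set (delta ?M')) (init M, replicate ?n []) \<sigma>' (?T, v)"
        using s(2) init' by (simp add: runs_truns init_cfg_def)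
      have i0: "fst (init M, replicate ?n []) \<in> set (states M)" using init by simp
      have t0: "fst (?T, v) \<notin> set (states M)" using Tns by simp
      from first_exit[OF r i0 t0] obtain \<sigma>1 \<alpha> \<sigma>2 c1 c2 where
        ex: "\<sigma>' = \<sigma>1 @ \<alpha> # \<sigma>2"
          "truns (set (delta ?M') \<inter> {(s, a, t). s \<in> set (states M) \<and> t \<in> set (states M)}) (init M, replicate ?n []) \<sigma>1 c1"
          "fst c1 \<in> set (states M)" "fst c2 \<notin> set (states M)" "(fst c1, \<alpha>, fst c2) \<in> set (delta ?M')"
          "apply_act \<alpha> (snd c1) = Some (snd c2)" "truns (set (delta ?M')) c2 \<sigma>2 (?T, v)"
        by blast
      have inside: "set (delta ?M') \<inter> {(s, a, t). s \<in> set (states M) \<and> t \<in> set (states M)} \<subseteq> set (delta M)"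
      proof (clarify)
        fix s a t assume st: "(s, a, t) \<in> set (delta ?M')" "s \<in> set (states M)" "t \<in> set (states M)"
        show "(s, a, t) \<in> set (delta M)"
        proof (rule ccontr)
          assume "(s, a, t) \<notin> set (delta M)"
          with st(1) have "(s, a, t) \<in> set ?ch" unfolding T' by blast
          then obtain k where "t = ?h + Suc k" unfolding set_chain by blast
          moreover have "t < ?h" using st(3) by (rule stlt)
          ultimately show False by simp
        qed
      qed
      have r1: "truns (set (delta M)) (init M, replicate ?n []) \<sigma>1 c1" using truns_mono[OF ex(2) inside] .
      have "(fst c1, \<alpha>, fst c2) \<notin> set (delta M)" using ex(4) olds by blast
      then have "(fst c1, \<alpha>, fst c2) \<in> set ?ch" using ex(5) unfolding T' by blast
      then obtain j where j: "j < ?K" "fst c1 = (if j = 0 then q else ?h + j)" "\<alpha> = ?acts ! j" "fst c2 = ?h + Suc j"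
        unfolding set_chain by blast
      have j0: "j = 0"
      proof (rule ccontr)
        assume "j \<noteq> 0"
        then have "fst c1 = ?h + j" using j(2) by simp
        moreover have "fst c1 < ?h" using ex(3) by (rule stlt)
        ultimately show False by simp
      qed
      have Ot: "\<forall>(s, a, t) \<in> set (delta M). s < ?h" using olds stlt by blast
      have c2e: "c2 = (?h + 1, snd c2)" using j j0 by (cases c2) simp
      have tr2: "truns (set (delta ?M')) (?h + 1, snd c2) \<sigma>2 (?h + ?K, v)"
        using ex(7) False c2e by simp
      have "\<sigma>2 = drop 1 ?acts \<and> exec \<sigma>2 (snd c2) = Some v"
        by (rule chain_follow[OF T' Ot qlt tr2]) (use Kpos in linarith)+
      then have s2: "\<sigma>2 = drop 1 ?acts" "exec \<sigma>2 (snd c2) = Some v" by auto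
      have acts: "?acts = ?acts ! 0 # drop 1 ?acts"
      proof -
        have "?acts ! 0 # drop (Suc 0) ?acts = drop 0 ?acts" by (rule Cons_nth_drop_Suc) (use Kpos in simp)
        then show ?thesis by simp
      qed
      have a2: "\<alpha> # \<sigma>2 = ?acts"
      proof -
        have "\<alpha> # \<sigma>2 = ?acts ! 0 # drop 1 ?acts" using s2(1) j(3) j0 by simp
        also have "\<dots> = ?acts" by (rule acts[symmetric])
        finally show ?thesis .
      qed
      have sig: "\<sigma>' = \<sigma>1 @ ?acts" using ex(1) a2 by simp
      have ex1: "exec ?acts (snd c1) = Some v" unfolding a2[symmetric] using ex(6) s2(2) by simp
      have sa1: "set \<sigma>1 \<subseteq> actions M" using wf_truns_actions[OF wf r1] .
      have ok: "contents_ok M (snd c1)" using truns_ok[OF r1 sa1] init_ok by simp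
      have lc1: "length (snd c1) = ?n" using truns_length[OF r1] by simp
      have "\<forall>j<length ws. 0 + j < length (snd c1) \<and> snd c1 ! (0 + j) = ws ! j"
        by (rule gacts_back[OF ex1]) (use hws ok lc1 lw hnot in \<open>auto simp: contents_ok_def\<close>)
      then have c1ws: "snd c1 = ws" using lc1 lw by (auto intro: nth_equalityI)
      have "\<forall>c<?n. proj_send c \<sigma>1 \<in> nfa_lang (As ! c)"
      proof (intro allI impI)
        fix c assume c: "c < ?n"
        then have "proj_send c \<sigma>' \<in> {u @ [?h] | u. u \<in> nfa_lang (As ! c)}" using s(1) unfolding Lsend' by auto
        then show "proj_send c \<sigma>1 \<in> nfa_lang (As ! c)" using projacts[OF c] sig by auto
      qed
      then have "\<sigma>1 \<in> LsendA M As" using sa1 by (auto simp: LsendA_def Lsend_def)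
      moreover have "runs M (init_cfg M) \<sigma>1 (q, ws)"
        using r1 c1ws j j0 by (cases c1) (auto simp: runs_truns init_cfg_def)
      ultimately show ?thesis by (auto simp: IB_reach_def i Reach_def)
    qed
  qed
  with valid show ?thesis by simp
qed

declare list_encode.simps(2)[simp del]
declare enc_act.simps[simp del]

definition cons_c :: "nat \<Rightarrow> nat \<Rightarrow> nat" where "cons_c x l = Suc (prod_encode (x, l))"

lemma cons_c_simp[simp]: "cons_c x (list_encode xs) = list_encode (x # xs)"
  by (simp add: cons_c_def list_encode.simps(2))

lemma cons_c_0[simp]: "cons_c x 0 = list_encode [x]"
  by (simp add: cons_c_def list_encode.simps(2))

lemma comp_cons[intro!]: "computable f \<Longrightarrow> computable g \<Longrightarrow> computable (\<lambda>n. cons_c (f n) (g n))"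
  unfolding cons_c_def by (intro comp_Suc comp_pe)

lemma hd_tl_le[simp]: "hd_c (list_encode (x # xs)) = x" "tl_c (list_encode (x # xs)) = list_encode xs"
  by (simp_all add: list_encode.simps(2))

definition c0 :: "nat \<Rightarrow> nat" where "c0 n = hd_c n"
definition c1 :: "nat \<Rightarrow> nat" where "c1 n = hd_c (tl_c n)"
definition c2 :: "nat \<Rightarrow> nat" where "c2 n = hd_c (tl_c (tl_c n))"
definition c3 :: "nat \<Rightarrow> nat" where "c3 n = hd_c (tl_c (tl_c (tl_c n)))"
definition c4 :: "nat \<Rightarrow> nat" where "c4 n = hd_c (tl_c (tl_c (tl_c (tl_c n))))"

lemma c_simps[simp]:
  "c0 (list_encode (a # xs)) = a"
  "c1 (list_encode (a # b # xs)) = b"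
  "c2 (list_encode (a # b # c # xs)) = c"
  "c3 (list_encode (a # b # c # d # xs)) = d"
  "c4 (list_encode (a # b # c # d # e # xs)) = e"
  by (simp_all only: c0_def c1_def c2_def c3_def c4_def hd_tl_le)

lemma comp_c[intro!]:
  "computable f \<Longrightarrow> computable (\<lambda>n. c0 (f n))"
  "computable f \<Longrightarrow> computable (\<lambda>n. c1 (f n))"
  "computable f \<Longrightarrow> computable (\<lambda>n. c2 (f n))"
  "computable f \<Longrightarrow> computable (\<lambda>n. c3 (f n))"
  "computable f \<Longrightarrow> computable (\<lambda>n. c4 (f n))"
  unfolding c0_def c1_def c2_def c3_def c4_def by (intro comp_hd comp_tl; assumption)+

definition dcode :: "nat \<times> act \<times> nat \<Rightarrow> nat" where
  "dcode = (\<lambda>(q, a, q'). prod_encode (q, prod_encode (enc_act a, q')))"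

lemma dcode_simp[simp]: "dcode (q, a, q') = prod_encode (q, prod_encode (enc_act a, q'))"
  by (simp add: dcode_def)

lemma enc_fifo_parts:
  "c0 (enc_fifo M) = list_encode (states M)" "c1 (enc_fifo M) = nch M" "c2 (enc_fifo M) = enc_nll (alph M)"
  "c3 (enc_fifo M) = list_encode (map dcode (delta M))" "c4 (enc_fifo M) = init M"
  by (simp_all add: enc_fifo_def dcode_def enc_nll_def)

lemma enc_fifo_eq: "enc_fifo M = list_encode [list_encode (states M), nch M, enc_nll (alph M),
   list_encode (map dcode (delta M)), init M]"
  by (simp add: enc_fifo_def dcode_def)



lemma enc_act_simps[simp]: "enc_act (Snd c a) = 2 * prod_encode (c, a)" "enc_act (Rcv c a) = Suc (2 * prod_encode (c, a))"
  by (simp_all add: sum_encode_def enc_act.simps)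

definition ext_code :: "nat \<Rightarrow> nat \<Rightarrow> nat \<Rightarrow> nat" where
  "ext_code eM tsc D = cons_c (cons_c D (c0 eM)) (cons_c (Suc (c1 eM))
     (cons_c (app_c (c2 eM) (cons_c (cons_c 0 0) 0)) (cons_c (app_c tsc (c3 eM)) (cons_c (c4 eM) 0))))"

lemma enc_fifo_extM: "enc_fifo (extM M ts D) = ext_code (enc_fifo M) (list_encode (map dcode ts)) D"
  by (simp add: enc_fifo_eq ext_code_def enc_fifo_parts extM_def enc_nll_def flip: list_encode.simps(1) del: dcode_simp)

lemma comp_ext_code[intro!]: "computable a \<Longrightarrow> computable b \<Longrightarrow> computable c \<Longrightarrow>
   computable (\<lambda>n. ext_code (a n) (b n) (c n))"
  unfolding ext_code_def by (intro comp_Suc comp_cons comp_c comp_app comp_const; assumption?)+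

lemma enc_langs_app: "enc_langs (As @ [A]) = app_c (enc_langs As) (list_encode [enc_nfa A])"
  by (simp add: enc_langs_def)

definition f3 :: "nat \<Rightarrow> nat" where
  "f3 n = cons_c (ext_code (c0 n)
      (cons_c (prod_encode (c2 n, prod_encode (2 * prod_encode (c1 (c0 n), 0), c0 n)))
         (map_c (\<lambda>z p. prod_encode (p, prod_encode (2 * prod_encode (z, 0), p))) (c1 (c0 n)) (c0 (c0 n))))
      (c0 n))
    (cons_c (app_c (c1 n) (cons_c (enc_nfa A1) 0)) 0)"

lemma f3_correct: "f3 (enc_cs i) = enc_dl (r3 i)"
proof -
  obtain M As q where i: "i = (M, As, q)" by (cases i) auto
  have ts: "list_encode (map dcode (r3_ts M q)) =
     cons_c (prod_encode (q, prod_encode (2 * prod_encode (nch M, 0), enc_fifo M)))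
         (map_c (\<lambda>z p. prod_encode (p, prod_encode (2 * prod_encode (z, 0), p))) (nch M) (list_encode (states M)))"
    by (simp add: r3_ts_def comp_def)
  show ?thesis
    unfolding i enc_cs_def enc_dl_def r3_def
    by (simp add: f3_def enc_fifo_extM enc_langs_app ts enc_fifo_parts flip: list_encode.simps(1) del: dcode_simp)
qed

lemma comp_f3: "computable f3"
proof -
  have g: "comp2 (\<lambda>z p. prod_encode (p, prod_encode (2 * prod_encode (z, 0), p)))"
    unfolding comp2_def by (intro comp_pe comp_mul comp_const comp_pf comp_ps comp_id)
  show ?thesis unfolding f3_def
    by (intro comp_cons comp_pe comp_ext_code comp_c comp_id comp_app comp_const comp_mul comp_map[OF g])
qed

definition dgr :: "nat \<Rightarrow> nat \<Rightarrow> nat" where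
  "dgr zk a = prod_encode (pf zk, prod_encode (Suc (2 * prod_encode (ps zk, a)), pf zk))"

definition dstep :: "nat \<Rightarrow> nat \<Rightarrow> nat \<Rightarrow> nat" where
  "dstep z l acc = prod_encode (Suc (pf acc), app_c (map_c dgr (prod_encode (z, pf acc)) l) (ps acc))"

definition dr_code :: "nat \<Rightarrow> nat \<Rightarrow> nat" where
  "dr_code E alc = ps (fold_c dstep E alc (prod_encode (0, 0)))"

lemma dr_foldl: "foldl (\<lambda>acc x. dstep E x acc) (prod_encode (k, list_encode (map dcode acc0))) (map list_encode als) =
  prod_encode (fst (foldl (drain_step E) (k, acc0) als), list_encode (map dcode (snd (foldl (drain_step E) (k, acc0) als))))"
proof (induction als arbitrary: k acc0)
  case Nil then show ?case by simp
next
  case (Cons l als)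
  let ?acc = "map (\<lambda>a. (E, Rcv k a, E)) l @ acc0"
  have st: "dstep E (list_encode l) (prod_encode (k, list_encode (map dcode acc0))) =
     prod_encode (Suc k, list_encode (map dcode ?acc))"
  proof -
    have "dgr (prod_encode (E, k)) = (\<lambda>x. dcode (E, Rcv k x, E))" by (auto simp: dgr_def sum_encode_def enc_act.simps)
    then show ?thesis by (simp add: dstep_def comp_def del: dcode_simp)
  qed
  have fd: "foldl (drain_step E) (k, acc0) (l # als) = foldl (drain_step E) (Suc k, ?acc) als"
    by (simp add: drain_step_def)
  have "foldl (\<lambda>acc x. dstep E x acc) (prod_encode (k, list_encode (map dcode acc0))) (map list_encode (l # als))
      = foldl (\<lambda>acc x. dstep E x acc) (prod_encode (Suc k, list_encode (map dcode ?acc))) (map list_encode als)"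
    by (simp only: list.map(2) foldl_Cons st)
  also have "\<dots> = prod_encode (fst (foldl (drain_step E) (Suc k, ?acc) als), list_encode (map dcode (snd (foldl (drain_step E) (Suc k, ?acc) als))))"
    by (rule Cons.IH)
  finally show ?case unfolding fd .
qed

lemma dr_code_correct: "dr_code E (enc_nll als) = list_encode (map dcode (drains E als))"
  using dr_foldl[of E 0 "[]" als] by (simp add: dr_code_def drains_def enc_nll_def)

lemma comp_dr[intro!]: "computable f \<Longrightarrow> computable g \<Longrightarrow> computable (\<lambda>n. dr_code (f n) (g n))"
proof -
  assume f: "computable f" and g: "computable g"
  have dg: "comp2 dgr" unfolding comp2_def dgr_def by (intro comp_pe comp_Suc comp_mul comp_const comp_pf comp_ps comp_id)
  have "comp3 dstep" unfolding comp3_def dstep_def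
    by (intro comp_pe comp_Suc comp_pf comp_ps comp_id comp_app comp_map[OF dg])
  then show ?thesis unfolding dr_code_def using f g by (intro comp_ps comp_fold comp_pe comp_const)
qed

definition rep_c :: "nat \<Rightarrow> nat" where "rep_c m = ((\<lambda>a. cons_c 0 a) ^^ m) 0"

lemma rep_c_correct: "rep_c m = enc_nll (replicate m [])"
proof -
  have "((\<lambda>a. cons_c 0 a) ^^ m) 0 = list_encode (replicate m 0)"
    by (induction m) (simp_all add: list_encode.simps(2) cons_c_def)
  then show ?thesis by (simp add: rep_c_def enc_nll_def)
qed

lemma comp_rep[intro!]: "computable f \<Longrightarrow> computable (\<lambda>n. rep_c (f n))"
  unfolding rep_c_def by (intro comp_iter_simple comp_cons comp_const comp_id)

definition f2 :: "nat \<Rightarrow> nat" where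
  "f2 n = cons_c (ext_code (c0 n)
      (cons_c (prod_encode (c2 n, prod_encode (2 * prod_encode (c1 (c0 n), 0), c0 n)))
         (dr_code (c0 n) (app_c (c2 (c0 n)) (cons_c (cons_c 0 0) 0))))
      (c0 n))
    (cons_c (app_c (c1 n) (cons_c (enc_nfa A1) 0))
    (cons_c (prod_encode (c0 n, rep_c (Suc (c1 (c0 n))))) 0))"

lemma f2_correct: "f2 (enc_cs i) = enc_reach (r2 i)"
proof -
  obtain M As q where i: "i = (M, As, q)" by (cases i) auto
  have al: "app_c (enc_nll (alph M)) (cons_c (cons_c 0 0) 0) = enc_nll (alph M @ [[0]])"
    by (simp add: enc_nll_def flip: list_encode.simps(1))
  have ts: "list_encode (map dcode (r2_ts M q)) =
     cons_c (prod_encode (q, prod_encode (2 * prod_encode (nch M, 0), enc_fifo M)))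
         (dr_code (enc_fifo M) (app_c (enc_nll (alph M)) (cons_c (cons_c 0 0) 0)))"
    unfolding al dr_code_correct by (simp add: r2_ts_def)
  show ?thesis
    unfolding i enc_cs_def enc_reach_def r2_def
    by (simp add: f2_def enc_fifo_extM enc_langs_app ts enc_fifo_parts rep_c_correct flip: list_encode.simps(1) del: dcode_simp)
qed

lemma comp_f2: "computable f2"
  unfolding f2_def
  by (intro comp_cons comp_pe comp_ext_code comp_c comp_id comp_app comp_const comp_mul comp_dr comp_rep comp_Suc)

definition gact_c :: "nat \<Rightarrow> nat \<Rightarrow> nat \<Rightarrow> nat" where
  "gact_c h k wc = cons_c (2 * prod_encode (k, h))
     (app_c (map_c (\<lambda>k a. Suc (2 * prod_encode (k, a))) k wc) (cons_c (Suc (2 * prod_encode (k, h))) 0))"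

lemma gact_c_correct: "gact_c h k (list_encode w) = list_encode (map enc_act (gact h k w))"
proof -
  have "(\<lambda>a. Suc (2 * prod_encode (k, a))) = (\<lambda>a. enc_act (Rcv k a))" by (simp add: enc_act_simps)
  then show ?thesis by (simp add: gact_c_def gact_def comp_def enc_act_simps flip: list_encode.simps(1))
qed

definition gstep :: "nat \<Rightarrow> nat \<Rightarrow> nat \<Rightarrow> nat" where
  "gstep z wc acc = prod_encode (Suc (pf acc), app_c (ps acc) (gact_c z (pf acc) wc))"

definition ga_code :: "nat \<Rightarrow> nat \<Rightarrow> nat" where
  "ga_code h wsc = ps (fold_c gstep h wsc (prod_encode (0, 0)))"

lemma ga_foldl: "foldl (\<lambda>acc x. gstep h x acc) (prod_encode (k, list_encode (map enc_act acc0))) (map list_encode ws) =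
  prod_encode (k + length ws, list_encode (map enc_act (acc0 @ gacts h k ws)))"
proof (induction ws arbitrary: k acc0)
  case Nil then show ?case by simp
next
  case (Cons w ws)
  have st: "gstep h (list_encode w) (prod_encode (k, list_encode (map enc_act acc0))) =
     prod_encode (Suc k, list_encode (map enc_act (acc0 @ gact h k w)))"
    by (simp add: gstep_def gact_c_correct)
  have "foldl (\<lambda>acc x. gstep h x acc) (prod_encode (k, list_encode (map enc_act acc0))) (map list_encode (w # ws))
      = foldl (\<lambda>acc x. gstep h x acc) (prod_encode (Suc k, list_encode (map enc_act (acc0 @ gact h k w)))) (map list_encode ws)"
    by (simp only: list.map(2) foldl_Cons st)
  also have "\<dots> = prod_encode (Suc k + length ws, list_encode (map enc_act ((acc0 @ gact h k w) @ gacts h (Suc k) ws)))"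
    by (rule Cons.IH)
  finally show ?case by simp
qed

lemma ga_code_correct: "ga_code h (enc_nll ws) = list_encode (map enc_act (gacts h 0 ws))"
  using ga_foldl[of h 0 "[]" ws] by (simp add: ga_code_def enc_nll_def flip: list_encode.simps(1))

definition cstep :: "nat \<Rightarrow> nat \<Rightarrow> nat \<Rightarrow> nat" where
  "cstep z a acc = prod_encode (Suc (pf acc),
     cons_c (prod_encode (if pf acc = 0 then pf z else ps z + pf acc, prod_encode (a, ps z + Suc (pf acc)))) (ps acc))"

lemma ch_foldl: "foldl (\<lambda>acc x. cstep (prod_encode (q, h)) x acc) (prod_encode (i, list_encode (map dcode acc0))) (map enc_act as) =
  prod_encode (fst (foldl (chain_step q h) (i, acc0) as), list_encode (map dcode (snd (foldl (chain_step q h) (i, acc0) as))))"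
proof (induction as arbitrary: i acc0)
  case Nil then show ?case by simp
next
  case (Cons a as)
  let ?acc = "(if i = 0 then q else h + i, a, h + Suc i) # acc0"
  have st: "cstep (prod_encode (q, h)) (enc_act a) (prod_encode (i, list_encode (map dcode acc0))) =
     prod_encode (Suc i, list_encode (map dcode ?acc))"
    by (simp add: cstep_def del: dcode_simp) (simp add: dcode_def)
  have fd: "foldl (chain_step q h) (i, acc0) (a # as) = foldl (chain_step q h) (Suc i, ?acc) as"
    by (simp add: chain_step_def)
  have "foldl (\<lambda>acc x. cstep (prod_encode (q, h)) x acc) (prod_encode (i, list_encode (map dcode acc0))) (map enc_act (a # as))
     = foldl (\<lambda>acc x. cstep (prod_encode (q, h)) x acc) (prod_encode (Suc i, list_encode (map dcode ?acc))) (map enc_act as)"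
    by (simp only: list.map(2) foldl_Cons st)
  also have "\<dots> = prod_encode (fst (foldl (chain_step q h) (Suc i, ?acc) as), list_encode (map dcode (snd (foldl (chain_step q h) (Suc i, ?acc) as))))"
    by (rule Cons.IH)
  finally show ?case unfolding fd .
qed

lemma ch_code_correct: "fold_c cstep (prod_encode (q, h)) (list_encode (map enc_act acts)) (prod_encode (0, 0)) =
   prod_encode (length acts, list_encode (map dcode (chain q h acts)))"
  using ch_foldl[of q h 0 "[]" acts] chain_foldl[of q h 0 "[]" acts]
  by (simp add: chain_def flip: list_encode.simps(1))

definition mk_c :: "nat \<Rightarrow> nat \<Rightarrow> nat" where
  "mk_c h ac = cons_c (c0 ac) (cons_c (app_c (map_c (\<lambda>z f. prod_encode (f, prod_encode (pf z, ps z))) (prod_encode (h, ac)) (c2 ac)) (c1 ac))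
     (cons_c (cons_c ac 0) 0))"

lemma enc_nfa_eq: "enc_nfa A = list_encode [list_encode (nstart A), list_encode (map tr_code (ntrans A)), list_encode (nfinal A)]"
  by (simp add: enc_nfa_def tr_code_def)

lemma mk_c_correct: "mk_c h (enc_nfa A) = enc_nfa (mark h A)"
proof -
  let ?F = "enc_nfa A"
  have p0: "c0 ?F = list_encode (nstart A)" and p1: "c1 ?F = list_encode (map tr_code (ntrans A))"
    and p2: "c2 ?F = list_encode (nfinal A)"
    by (subst enc_nfa_eq, simp)+
  have f: "(\<lambda>f. prod_encode (f, prod_encode (pf (prod_encode (h, ?F)), ps (prod_encode (h, ?F))))) =
        tr_code \<circ> (\<lambda>f. (f, h, ?F))"
    by (auto simp: tr_code_def)
  have "mk_c h ?F = list_encode [list_encode (nstart A),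
      list_encode (map tr_code (map (\<lambda>f. (f, h, ?F)) (nfinal A) @ ntrans A)), list_encode [?F]]"
    unfolding mk_c_def p0 p1 p2 map_c_simp f
    by (simp flip: list_encode.simps(1))
  also have "\<dots> = enc_nfa (mark h A)"
    by (subst enc_nfa_eq[of "mark h A"]) (simp add: mark_def)
  finally show ?thesis .
qed

definition ga1 :: "nat \<Rightarrow> nat" where "ga1 n = ga_code (c0 n) (ps (c2 n))"
definition chf :: "nat \<Rightarrow> nat" where "chf n = fold_c cstep (prod_encode (pf (c2 n), c0 n)) (ga1 n) (prod_encode (0, 0))"

definition f1 :: "nat \<Rightarrow> nat" where
  "f1 n = cons_c
     (cons_c (app_c (map_c (\<lambda>z x. ps (ps x)) 0 (ps (chf n))) (c0 (c0 n)))
       (cons_c (c1 (c0 n)) (cons_c (map_c (\<lambda>z lc. cons_c z lc) (c0 n) (c2 (c0 n)))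
         (cons_c (app_c (ps (chf n)) (c3 (c0 n))) (cons_c (c4 (c0 n)) 0)))))
     (cons_c (map_c mk_c (c0 n) (c1 n))
       (cons_c (if ps (c2 n) = 0 then pf (c2 n) else c0 n + pf (chf n)) 0))"

lemma enc_nll_0: "enc_nll ws = 0 \<longleftrightarrow> ws = []"
  by (cases ws) (simp_all add: enc_nll_def list_encode.simps(2))

lemma f1_correct: "f1 (enc_reach i) = enc_cs (r1 i)"
proof -
  obtain M As q ws where i: "i = (M, As, (q, ws))" by (cases i) auto
  let ?h = "enc_fifo M"
  let ?acts = "gacts ?h 0 ws"
  let ?ch = "chain q ?h ?acts"
  have e: "enc_reach i = list_encode [?h, enc_langs As, prod_encode (q, enc_nll ws)]"
    by (simp add: i enc_reach_def)
  have g: "ga1 (enc_reach i) = list_encode (map enc_act ?acts)"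
    unfolding e ga1_def by (simp add: ga_code_correct)
  have c: "chf (enc_reach i) = prod_encode (length ?acts, list_encode (map dcode ?ch))"
    unfolding chf_def e c_simps pf_pe g[unfolded e] by (rule ch_code_correct)
  have st: "map_c (\<lambda>z x. ps (ps x)) 0 (list_encode (map dcode ?ch)) = list_encode (map (\<lambda>(s, a, t). t) ?ch)"
  proof -
    have "(\<lambda>x. ps (ps (dcode x))) = (\<lambda>(s, a, t). t)" by (rule ext) (auto simp: dcode_def split: prod.split)
    then show ?thesis by (simp add: comp_def)
  qed
  have al: "map_c (\<lambda>z lc. cons_c z lc) ?h (enc_nll (alph M)) = enc_nll (map (\<lambda>l. ?h # l) (alph M))"
    by (simp add: enc_nll_def comp_def)
  have As: "map_c mk_c ?h (enc_langs As) = enc_langs (map (mark ?h) As)"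
    by (simp add: enc_langs_def comp_def mk_c_correct)
  show ?thesis
    unfolding f1_def c
    apply (simp only: e c_simps ps_pe pf_pe st enc_fifo_parts As al enc_nll_0)
    apply (simp add: i enc_cs_def r1_def enc_fifo_eq[of "r1M M q ws"] del: dcode_simp)
    apply (simp add: r1M_def)
    done
qed

lemma comp_ga1: "computable ga1"
proof -
  have r: "comp2 (\<lambda>k a. Suc (2 * prod_encode (k, a)))" unfolding comp2_def
    by (intro comp_Suc comp_mul comp_const comp_pe comp_pf comp_ps comp_id)
  have "comp3 gstep" unfolding comp3_def gstep_def gact_c_def
    by (intro comp_pe comp_Suc comp_pf comp_ps comp_id comp_app comp_cons comp_mul comp_const comp_map[OF r])
  then show ?thesis unfolding ga1_def ga_code_def
    by (intro comp_ps comp_fold comp_c comp_id comp_pe comp_const)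
qed

lemma comp_chf: "computable chf"
proof -
  have "comp3 cstep" unfolding comp3_def cstep_def
    by (intro comp_pe comp_Suc comp_pf comp_ps comp_id comp_cons comp_if0 comp_add comp_const)
  then show ?thesis unfolding chf_def
    by (intro comp_fold comp_pe comp_pf comp_c comp_id comp_ga1 comp_const)
qed

lemma comp_f1: "computable f1"
proof -
  have a: "comp2 (\<lambda>z x. ps (ps x))" unfolding comp2_def by (intro comp_ps comp_id)
  have b: "comp2 (\<lambda>z lc. cons_c z lc)" unfolding comp2_def by (intro comp_cons comp_pf comp_ps comp_id)
  have m: "comp2 mk_c"
  proof -
    have i: "comp2 (\<lambda>z f. prod_encode (f, prod_encode (pf z, ps z)))" unfolding comp2_def
      by (intro comp_pe comp_pf comp_ps comp_id)
    show ?thesis unfolding comp2_def mk_c_def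
      by (intro comp_cons comp_c comp_ps comp_pf comp_id comp_app comp_map[OF i] comp_pe comp_const)
  qed
  show ?thesis unfolding f1_def
    by (intro comp_cons comp_app comp_map[OF a] comp_map[OF b] comp_map[OF m] comp_ps comp_pf comp_chf comp_c comp_id
        comp_const comp_if0 comp_add)
qed

lemma mor_intro:
  assumes "computable f" "\<And>i. validA i \<Longrightarrow> validB (r i) \<and> (yesA i \<longleftrightarrow> yesB (r i))"
    "\<And>i. f (encA i) = encB (r i)"
  shows "many_one_reducible encA validA yesA encB validB yesB"
  unfolding many_one_reducible_def using assms by metis

theorem proposition4p2:
  shows "(many_one_reducible enc_reach valid_reach IB_reach enc_cs valid_cs IB_cs_reach \<and>
          many_one_reducible enc_cs valid_cs IB_cs_reach enc_reach valid_reach IB_reach) \<and>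
         many_one_reducible enc_reach valid_reach IB_reach enc_dl valid_dl IB_deadlock"
proof (intro conjI)
  show "many_one_reducible enc_reach valid_reach IB_reach enc_cs valid_cs IB_cs_reach"
    by (rule mor_intro[where f=f1 and r=r1]) (rule comp_f1, erule r1_correct, rule f1_correct)
  show "many_one_reducible enc_cs valid_cs IB_cs_reach enc_reach valid_reach IB_reach"
    by (rule mor_intro[where f=f2 and r=r2]) (rule comp_f2, erule r2_correct, rule f2_correct)
  have c: "computable (\<lambda>n. f3 (f1 n))" by (rule comp_un[OF comp_f3 comp_f1])
  show "many_one_reducible enc_reach valid_reach IB_reach enc_dl valid_dl IB_deadlock"
  proof (rule mor_intro[OF c, where r="\<lambda>i. r3 (r1 i)"])
    fix i assume "valid_reach i"
    then show "valid_dl (r3 (r1 i)) \<and> (IB_reach i \<longleftrightarrow> IB_deadlock (r3 (r1 i)))"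
      using r1_correct r3_correct by blast
  next
    fix i show "f3 (f1 (enc_reach i)) = enc_dl (r3 (r1 i))" by (simp add: f1_correct f3_correct)
  qed
qed

end
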